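(* Let $\widetilde L$ be a standardized Laplacian matrix of order $n$, $P=\widetilde L+J$, $\widetilde L_c=K-\widetilde L$. Let $d$ be the in-forest dimension of the digraph $\Gamma$ of $\widetilde L$ and $d_c$ the in-forest dimension of the complementary digraph $\Gamma_c$. For a matrix $A$ let $m_A(\lambda)$ be the algebraic multiplicity of $\lambda$ as an eigenvalue of $A$ (zero if $\lambda\notin\operatorname{sp}A$) and $V_A(\lambda)$ the eigenspace of $A$ for $\lambda$. Then: (i) $m_{\widetilde L}(0)=d$, $m_{\widetilde L}(1)=d_c-1$; (ii) $m_P(0)=d-1$, $m_P(1)=d_c$; (iii) $m_{\widetilde L_c}(1)=d-1$, $m_{\widetilde L_c}(0)=d_c$; and each of these eigenvalues (whenever its multiplicity is positive) is semisimple; (iv) if $v\in V_{\widetilde L}(0)$ and $Kv\ne0$, then $Kv\in V_P(0)=V_{\widetilde L_c}(1)$; if $x\in V_P(1)=V_{\widetilde L_c}(0)$ and $Kx\ne0$, then $Kx\in V_{\widetilde L}(1)$.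
   Context: A standardized Laplacian matrix of order $n$ is a real $n\times n$ matrix whose row sums are all $0$ and whose off-diagonal entries are nonpositive with absolute value at most $1/n$. $J$ is the $n\times n$ matrix with all entries $1/n$, and $K=I-J$. The digraph $\Gamma$ of $\widetilde L=[\widetilde l_{ij}]$ has vertex set $\{1,\dots,n\}$ and an arc $i\to j$ ($j\ne i$) iff $\widetilde l_{ij}\ne0$; the complementary digraph $\Gamma_c$ has an arc $i\to j$ ($j\ne i$) iff $\widetilde l_{ij}\ne-1/n$ (it is the digraph of $\widetilde L_c$). A converging tree is a rooted directed tree containing a directed path from every vertex to the root; an in-forest of a digraph is a spanning subgraph whose weak components are converging trees; the in-forest dimension is the minimum number of trees in an in-forest. *)

theory Defs
  imports "Jordan_Normal_Form.Jordan_Normal_Form_Uniqueness"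
begin

(* Matrices of order n are real n x n matrices of type real mat in carrier_mat n n;
   indices/vertices are 0..n-1 instead of 1..n. *)

definition Jmat :: "nat \<Rightarrow> real mat" where
  "Jmat n = mat n n (\<lambda>_. 1 / real n)"

definition Kmat :: "nat \<Rightarrow> real mat" where
  "Kmat n = 1\<^sub>m n - Jmat n"

definition standardized_laplacian :: "nat \<Rightarrow> real mat \<Rightarrow> bool" where
  "standardized_laplacian n L \<longleftrightarrow>
     L \<in> carrier_mat n n \<and>
     (\<forall>i<n. (\<Sum>j<n. L $$ (i, j)) = 0) \<and>
     (\<forall>i<n. \<forall>j<n. i \<noteq> j \<longrightarrow> L $$ (i, j) \<le> 0 \<and> \<bar>L $$ (i, j)\<bar> \<le> 1 / real n)"

definition digraph_of :: "nat \<Rightarrow> real mat \<Rightarrow> (nat \<times> nat) set" where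
  "digraph_of n L = {(i, j). i < n \<and> j < n \<and> i \<noteq> j \<and> L $$ (i, j) \<noteq> 0}"

definition compl_digraph_of :: "nat \<Rightarrow> real mat \<Rightarrow> (nat \<times> nat) set" where
  "compl_digraph_of n L = {(i, j). i < n \<and> j < n \<and> i \<noteq> j \<and> L $$ (i, j) \<noteq> - 1 / real n}"

definition weak_components :: "nat \<Rightarrow> (nat \<times> nat) set \<Rightarrow> nat set set" where
  "weak_components n F = {0..<n} // ((F \<union> F\<inverse>)\<^sup>*)"

(* (C, T) is a converging tree: a rooted directed tree (weakly connected, |T| = |C| - 1,
   i.e. underlying graph is a tree) with a directed path from every vertex to the root *)
definition converging_tree :: "nat set \<Rightarrow> (nat \<times> nat) set \<Rightarrow> bool" where
  "converging_tree C T \<longleftrightarrow>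
     finite C \<and> C \<noteq> {} \<and> T \<subseteq> C \<times> C \<and>
     (\<forall>u\<in>C. \<forall>v\<in>C. (u, v) \<in> (T \<union> T\<inverse>)\<^sup>*) \<and>
     card T = card C - 1 \<and>
     (\<exists>r\<in>C. \<forall>v\<in>C. (v, r) \<in> T\<^sup>*)"

definition in_forest :: "nat \<Rightarrow> (nat \<times> nat) set \<Rightarrow> (nat \<times> nat) set \<Rightarrow> bool" where
  "in_forest n E F \<longleftrightarrow> F \<subseteq> E \<and>
     (\<forall>C \<in> weak_components n F. converging_tree C (F \<inter> (C \<times> C)))"

definition in_forest_dim :: "nat \<Rightarrow> (nat \<times> nat) set \<Rightarrow> nat" where
  "in_forest_dim n E = Min {card (weak_components n F) | F. in_forest n E F}"

definition alg_mult :: "real mat \<Rightarrow> real \<Rightarrow> nat" where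
  "alg_mult A ev = Polynomial.order ev (char_poly A)"

definition geom_mult :: "real mat \<Rightarrow> real \<Rightarrow> nat" where
  "geom_mult A ev = kernel_dim (char_matrix A ev)"

definition semisimple_eigenvalue :: "real mat \<Rightarrow> real \<Rightarrow> bool" where
  "semisimple_eigenvalue A ev \<longleftrightarrow> geom_mult A ev = alg_mult A ev"

definition eigenspace :: "real mat \<Rightarrow> real \<Rightarrow> real vec set" where
  "eigenspace A ev = {v \<in> carrier_vec (dim_col A). A *\<^sub>v v = ev \<cdot>\<^sub>v v}"

end

theory Submission
  imports Defs
begin


lemma kernel_dim_pivot:
  fixes A :: "'a::field mat"
  assumes A: "A \<in> carrier_mat nr nc" and I: "finite I"
    and fk: "\<And>i. i \<in> I \<Longrightarrow> f i \<in> mat_kernel A"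
    and p: "\<And>i. i \<in> I \<Longrightarrow> p i < nc"
    and delta: "\<And>i j. i \<in> I \<Longrightarrow> j \<in> I \<Longrightarrow> f i $ p j = (if i = j then 1 else 0)"
    and span: "\<And>v l. v \<in> mat_kernel A \<Longrightarrow> l < nc \<Longrightarrow> v $ l = (\<Sum>i\<in>I. v $ p i * f i $ l)"
  shows "kernel_dim A = card I"
proof -
  interpret K: kernel nr nc A by (unfold_locales) (rule A)
  have inj: "inj_on f I"
  proof
    fix i j assume ij: "i \<in> I" "j \<in> I" "f i = f j"
    have "f i $ p j = 1" using ij delta[of j j] by simp
    with delta[of i j] ij show "i = j" by (auto split: if_splits)
  qed
  define B where "B = f ` I"
  have finB: "finite B" using I B_def by auto
  have BK: "B \<subseteq> mat_kernel A" using fk B_def by auto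
  have Bc: "B \<subseteq> carrier_vec nc" using BK mat_kernel_carrier[of A nr nc] A by auto
  have lc: "K.lincomb a B $ l = (\<Sum>i\<in>I. a (f i) * f i $ l)" if "l < nc" for a l
    using K.lincomb_index[OF that BK] unfolding B_def sum.reindex[OF inj] by simp
  have li: "K.lin_indpt B"
  proof (rule K.Ker.finite_lin_indpt2[OF finB BK], goal_cases)
    case (1 a)
    note a0 = 1(2)
    show ?case
    proof
      fix v assume "v \<in> B"
      then obtain j where j: "j \<in> I" "v = f j" unfolding B_def by auto
      have "K.lincomb a B $ p j = 0" using a0 p[OF j(1)] by simp
      also have "K.lincomb a B $ p j = (\<Sum>i\<in>I. a (f i) * f i $ p j)" by (rule lc[OF p[OF j(1)]])
      also have "\<dots> = (\<Sum>i\<in>I. if i = j then a (f i) else 0)"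
        by (rule sum.cong, simp, simp add: delta j(1))
      also have "\<dots> = a (f j)" using j(1) I by simp
      finally show "a v = 0" using j by simp
    qed
  qed
  have sp: "K.span B = mat_kernel A"
  proof
    show "K.span B \<subseteq> mat_kernel A"
      using K.Ker.span_is_submodule[OF BK] unfolding submodule_def by auto
    show "mat_kernel A \<subseteq> K.span B"
    proof
      fix v assume v: "v \<in> mat_kernel A"
      define a where "a = (\<lambda>x. v $ p (the_inv_into I f x))"
      have vc: "v \<in> carrier_vec nc" using v mat_kernel_carrier[of A nr nc] A by auto
      have "K.lincomb a B = v"
      proof (rule eq_vecI)
        fix l assume l: "l < dim_vec v"
        hence l': "l < nc" using vc by auto
        have "K.lincomb a B $ l = (\<Sum>i\<in>I. a (f i) * f i $ l)" by (rule lc[OF l'])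
        also have "\<dots> = (\<Sum>i\<in>I. v $ p i * f i $ l)"
          by (rule sum.cong, simp, simp add: a_def the_inv_into_f_f[OF inj])
        also have "\<dots> = v $ l" using span[OF v l'] by simp
        finally show "K.lincomb a B $ l = v $ l" .
      next
        have "K.lincomb a B \<in> mat_kernel A" using K.Ker.lincomb_closed[OF BK] by auto
        hence "K.lincomb a B \<in> carrier_vec nc" using mat_kernel_carrier[of A nr nc] A by auto
        thus "dim_vec (K.lincomb a B) = dim_vec v" using vc by auto
      qed
      thus "v \<in> K.span B" using K.Ker.finite_span[OF finB BK] by auto
    qed
  qed
  have "K.basis B" unfolding K.Ker.basis_def using li sp BK by auto
  hence "K.dim = card B" using K.Ker.dim_basis[OF finB] by auto
  also have "card B = card I" unfolding B_def using card_image[OF inj] .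
  finally show ?thesis by simp
qed


lemma mult_vec_sum: "A \<in> carrier_mat n m \<Longrightarrow> x \<in> carrier_vec m \<Longrightarrow> i < n \<Longrightarrow>
  (A *\<^sub>v x) $ i = (\<Sum>j<m. A $$ (i,j) * x $ j)"
  by (auto simp: scalar_prod_def lessThan_atLeast0 intro!: sum.cong)

lemma std_carrier: "standardized_laplacian n L \<Longrightarrow> L \<in> carrier_mat n n"
  unfolding standardized_laplacian_def by auto

lemma std_rowsum: "standardized_laplacian n L \<Longrightarrow> i < n \<Longrightarrow> (\<Sum>j<n. L $$ (i, j)) = 0"
  unfolding standardized_laplacian_def by auto

lemma std_offdiag: "standardized_laplacian n L \<Longrightarrow> i < n \<Longrightarrow> j < n \<Longrightarrow> i \<noteq> j \<Longrightarrow> L $$ (i, j) \<le> 0"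
  unfolding standardized_laplacian_def by auto

lemma lap_diff_form: assumes std: "standardized_laplacian n L" and x: "x \<in> carrier_vec n" and i: "i < n"
  shows "(L *\<^sub>v x) $ i = (\<Sum>j<n. L $$ (i,j) * (x $ j - x $ i))"
proof -
  have "(L *\<^sub>v x) $ i = (\<Sum>j<n. L $$ (i,j) * x $ j)" using mult_vec_sum[OF std_carrier[OF std] x i] .
  also have "\<dots> = (\<Sum>j<n. L $$ (i,j) * x $ j) - x $ i * (\<Sum>j<n. L $$ (i, j))"
    using std_rowsum[OF std i] by simp
  also have "\<dots> = (\<Sum>j<n. L $$ (i,j) * (x $ j - x $ i))"
    by (simp add: sum_distrib_left sum_subtractf algebra_simps)
  finally show ?thesis .
qed

lemma lap_local: assumes std: "standardized_laplacian n L" and x: "x \<in> carrier_vec n" and i: "i < n"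
  and nb: "\<And>j. j < n \<Longrightarrow> j \<noteq> i \<Longrightarrow> L $$ (i,j) \<noteq> 0 \<Longrightarrow> x $ j \<le> x $ i"
shows "(L *\<^sub>v x) $ i \<ge> 0"
  and "(L *\<^sub>v x) $ i = 0 \<Longrightarrow> j < n \<Longrightarrow> j \<noteq> i \<Longrightarrow> L $$ (i,j) \<noteq> 0 \<Longrightarrow> x $ j = x $ i"
proof -
  have nn: "L $$ (i,j) * (x $ j - x $ i) \<ge> 0" if j: "j < n" for j
  proof (cases "j = i \<or> L $$ (i,j) = 0")
    case True thus ?thesis by auto
  next
    case False
    hence "L $$ (i,j) \<le> 0" "x $ j - x $ i \<le> 0" using std_offdiag[OF std i j] nb[OF j] by auto
    thus ?thesis by (simp add: mult_nonpos_nonpos)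
  qed
  show "(L *\<^sub>v x) $ i \<ge> 0" unfolding lap_diff_form[OF std x i] by (rule sum_nonneg, insert nn, auto)
  assume z: "(L *\<^sub>v x) $ i = 0" and j: "j < n" "j \<noteq> i" "L $$ (i,j) \<noteq> 0"
  have "\<forall>j\<in>{..<n}. L $$ (i,j) * (x $ j - x $ i) = 0"
    using z unfolding lap_diff_form[OF std x i] by (subst sum_nonneg_eq_0_iff[symmetric], insert nn, auto)
  hence "L $$ (i,j) * (x $ j - x $ i) = 0" using j by auto
  thus "x $ j = x $ i" using j by auto
qed

lemma digraph_of_iff: "(i,j) \<in> digraph_of n L \<longleftrightarrow> i < n \<and> j < n \<and> i \<noteq> j \<and> L $$ (i,j) \<noteq> 0"
  unfolding digraph_of_def by auto

lemma lap_prop: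
  assumes std: "standardized_laplacian n L" and x: "x \<in> carrier_vec n"
    and U: "U \<subseteq> {..<n}" and iU: "i \<in> U" and mx: "\<And>u. u \<in> U \<Longrightarrow> x $ u \<le> x $ i"
    and cl: "\<And>a b. a \<in> U \<Longrightarrow> a \<in> H \<Longrightarrow> (a,b) \<in> digraph_of n L \<Longrightarrow> b \<in> U"
    and harm: "\<And>a. a \<in> H \<Longrightarrow> (L *\<^sub>v x) $ a = 0"
    and path: "(i,v) \<in> {(a,b). (a,b) \<in> digraph_of n L \<and> a \<in> H}\<^sup>*"
  shows "v \<in> U \<and> x $ v = x $ i"
  using path
proof (induction rule: rtrancl_induct)
  case base thus ?case using iU by auto
next
  case (step w v)
  hence w: "w \<in> U" "x $ w = x $ i" "w \<in> H" and wv: "(w,v) \<in> digraph_of n L" by auto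
  have wn: "w < n" using w U by auto
  have vU: "v \<in> U" using cl[OF w(1) w(3) wv] .
  have "x $ v = x $ w"
  proof (rule lap_local(2)[OF std x wn])
    fix j assume "j < n" "j \<noteq> w" "L $$ (w,j) \<noteq> 0"
    hence "j \<in> U" using cl[OF w(1) w(3)] by (auto simp: digraph_of_iff wn)
    thus "x $ j \<le> x $ w" using mx w by auto
  next
    show "(L *\<^sub>v x) $ w = 0" using harm w by auto
  qed (insert wv, auto simp: digraph_of_iff)
  thus ?case using vU w by auto
qed

lemma exists_max: fixes f :: "nat \<Rightarrow> real"
  assumes "finite U" "U \<noteq> {}" shows "\<exists>i\<in>U. \<forall>u\<in>U. f u \<le> f i"
proof -
  have "Max (f ` U) \<in> f ` U" using assms by auto
  then obtain i where "i \<in> U" "f i = Max (f ` U)" by auto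
  moreover have "\<forall>u\<in>U. f u \<le> Max (f ` U)" using assms by auto
  ultimately show ?thesis by metis
qed

definition reaching :: "nat \<Rightarrow> (nat \<times> nat) set \<Rightarrow> nat set \<Rightarrow> bool" where
  "reaching n E R \<longleftrightarrow> R \<subseteq> {..<n} \<and> (\<forall>v<n. \<exists>r\<in>R. (v,r) \<in> E\<^sup>*)"

lemma path_to_first: assumes "(v,t) \<in> E\<^sup>*" "t \<in> R"
  shows "\<exists>r\<in>R. (v,r) \<in> {(a,b). (a,b) \<in> E \<and> a \<in> - R}\<^sup>*"
  using assms
proof (induction rule: converse_rtrancl_induct)
  case base thus ?case by auto
next
  case (step v w)
  then obtain r where r: "r \<in> R" "(w,r) \<in> {(a,b). (a,b) \<in> E \<and> a \<in> - R}\<^sup>*" by auto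
  show ?case
  proof (cases "v \<in> R")
    case True thus ?thesis by auto
  next
    case False
    hence "(v,w) \<in> {(a,b). (a,b) \<in> E \<and> a \<in> - R}" using step by auto
    thus ?thesis using r by (meson converse_rtrancl_into_rtrancl)
  qed
qed


lemma mult_neg_vec: fixes A :: "real mat" assumes A: "A \<in> carrier_mat n m" and x: "x \<in> carrier_vec m"
  shows "A *\<^sub>v (- x) = - (A *\<^sub>v x)"
proof -
  have "- x = (-1) \<cdot>\<^sub>v x" using x by auto
  hence "A *\<^sub>v (- x) = (-1) \<cdot>\<^sub>v (A *\<^sub>v x)" using mult_mat_vec[OF A x] by simp
  thus ?thesis by auto
qed

locale lapR =
  fixes n :: nat and L :: "real mat" and R :: "nat set"
  assumes std: "standardized_laplacian n L"
    and npos: "n > 0"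
    and reachR: "reaching n (digraph_of n L) R"
    and minR: "\<And>r. r \<in> R \<Longrightarrow> \<not> reaching n (digraph_of n L) (R - {r})"
begin

abbreviation "E \<equiv> digraph_of n L"

lemma Lc: "L \<in> carrier_mat n n" using std_carrier[OF std] .

lemma Rn: "R \<subseteq> {..<n}" using reachR unfolding reaching_def by auto
lemma finR: "finite R" using Rn finite_subset by blast

lemma E_n: "(a,b) \<in> E \<Longrightarrow> a < n \<and> b < n" by (auto simp: digraph_of_iff)

lemma Estar_n: "(a,b) \<in> E\<^sup>* \<Longrightarrow> a < n \<Longrightarrow> b < n"
  by (induction rule: rtrancl_induct, auto dest: E_n)

lemma reaches: "v < n \<Longrightarrow> \<exists>r\<in>R. (v,r) \<in> E\<^sup>*" using reachR unfolding reaching_def by auto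

lemma no_root_path: assumes r: "r \<in> R" and r': "r' \<in> R" "r' \<noteq> r" and p: "(r,r') \<in> E\<^sup>*"
  shows False
proof -
  have "reaching n E (R - {r})"
    unfolding reaching_def
  proof (intro conjI allI impI)
    show "R - {r} \<subseteq> {..<n}" using Rn by auto
    fix u assume "u < n"
    then obtain r'' where r'': "r'' \<in> R" "(u,r'') \<in> E\<^sup>*" using reaches by auto
    show "\<exists>r\<in>R - {r}. (u, r) \<in> E\<^sup>*"
    proof (cases "r'' = r")
      case True
      hence "(u,r') \<in> E\<^sup>*" using r'' p by auto
      thus ?thesis using r' by auto
    next
      case False thus ?thesis using r'' by auto
    qed
  qed
  thus False using minR[OF r] by auto
qed

lemma root_path_eq: "r \<in> R \<Longrightarrow> r' \<in> R \<Longrightarrow> (r,r') \<in> E\<^sup>* \<Longrightarrow> r' = r"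
  using no_root_path by blast

lemma sink_back: assumes r: "r \<in> R" and p: "(r,v) \<in> E\<^sup>*" shows "(v,r) \<in> E\<^sup>*"
proof -
  have "v < n" using Estar_n[OF p] r Rn by auto
  then obtain r' where r': "r' \<in> R" "(v,r') \<in> E\<^sup>*" using reaches by auto
  hence "(r,r') \<in> E\<^sup>*" using p by auto
  hence "r' = r" using root_path_eq r r' by auto
  thus ?thesis using r' by auto
qed

lemma const_aux: assumes x: "x \<in> carrier_vec n"
  and harm: "\<And>a. a < n \<Longrightarrow> a \<notin> R \<Longrightarrow> (L *\<^sub>v x) $ a = 0"
  and r: "r \<in> R" and p: "(r,v) \<in> E\<^sup>*"
shows "x $ v \<le> x $ r"
proof -
  define U where "U = {v. (r,v) \<in> E\<^sup>*}"
  have rn: "r < n" using r Rn by auto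
  have U: "U \<subseteq> {..<n}" unfolding U_def using Estar_n[OF _ rn] by blast
  have finU: "finite U" using U finite_subset by blast
  have "r \<in> U" unfolding U_def by auto
  then obtain i where i: "i \<in> U" and mx: "\<And>u. u \<in> U \<Longrightarrow> x $ u \<le> x $ i"
    using exists_max[OF finU, of "\<lambda>u. x $ u"] by auto
  have "(i,r) \<in> E\<^sup>*" using sink_back[OF r] i unfolding U_def by auto
  from path_to_first[OF this r] obtain r' where r': "r' \<in> R"
    and p': "(i,r') \<in> {(a,b). (a,b) \<in> E \<and> a \<in> - R}\<^sup>*" by auto
  have p'': "(i,r') \<in> {(a,b). (a,b) \<in> E \<and> a \<in> {a. a < n \<and> a \<notin> R}}\<^sup>*"
    by (rule rtrancl_mono[THEN subsetD, OF _ p'], auto dest: E_n)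
  have "r' \<in> U \<and> x $ r' = x $ i"
  proof (rule lap_prop[OF std x U i mx _ _ p''])
    fix a b assume "a \<in> U" "(a,b) \<in> E" thus "b \<in> U" unfolding U_def by auto
  next
    fix a assume "a \<in> {a. a < n \<and> a \<notin> R}" thus "(L *\<^sub>v x) $ a = 0" using harm by blast
  qed
  hence r'U: "(r,r') \<in> E\<^sup>*" and xr': "x $ r' = x $ i" unfolding U_def by auto
  have "r' = r" using root_path_eq[OF r r' r'U] .
  moreover have "x $ v \<le> x $ i" using mx[of v] p unfolding U_def by blast
  ultimately show ?thesis using xr' by simp
qed

lemma const_on_sink: assumes x: "x \<in> carrier_vec n"
  and harm: "\<And>a. a < n \<Longrightarrow> a \<notin> R \<Longrightarrow> (L *\<^sub>v x) $ a = 0"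
  and r: "r \<in> R" and p: "(r,v) \<in> E\<^sup>*"
shows "x $ v = x $ r"
proof -
  have vn: "v < n" using Estar_n[OF p] r Rn by auto
  have rn: "r < n" using r Rn by auto
  have "x $ v \<le> x $ r" using const_aux[OF x harm r p] by auto
  moreover have "(- x) $ v \<le> (- x) $ r"
  proof (rule const_aux[OF _ _ r p])
    show "- x \<in> carrier_vec n" using x by auto
    fix a assume "a < n" "a \<notin> R"
    thus "(L *\<^sub>v - x) $ a = 0" using harm mult_neg_vec[OF Lc x] Lc by auto
  qed
  ultimately show ?thesis using vn rn x by auto
qed

lemma harm_extend: assumes x: "x \<in> carrier_vec n"
  and harm: "\<And>a. a < n \<Longrightarrow> a \<notin> R \<Longrightarrow> (L *\<^sub>v x) $ a = 0"
shows "L *\<^sub>v x = 0\<^sub>v n"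
proof (rule eq_vecI)
  show "dim_vec (L *\<^sub>v x) = dim_vec (0\<^sub>v n)" using Lc by auto
  fix a assume "a < dim_vec (0\<^sub>v n)"
  hence a: "a < n" by auto
  show "(L *\<^sub>v x) $ a = 0\<^sub>v n $ a"
  proof (cases "a \<in> R")
    case False thus ?thesis using harm[OF a False] a by simp
  next
    case True
    have "(L *\<^sub>v x) $ a = (\<Sum>j<n. L $$ (a,j) * (x $ j - x $ a))" using lap_diff_form[OF std x a] .
    also have "\<dots> = 0"
    proof (rule sum.neutral, rule ballI)
      fix j assume "j \<in> {..<n}"
      show "L $$ (a,j) * (x $ j - x $ a) = 0"
      proof (cases "j = a \<or> L $$ (a,j) = 0")
        case False
        hence "(a,j) \<in> E" using \<open>j \<in> {..<n}\<close> a by (auto simp: digraph_of_iff)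
        hence "x $ j = x $ a" using const_on_sink[OF x harm True, of j] by blast
        thus ?thesis by simp
      qed auto
    qed
    finally show ?thesis using a by simp
  qed
qed

lemma zero_aux: assumes x: "x \<in> carrier_vec n"
  and harm: "\<And>a. a < n \<Longrightarrow> a \<notin> R \<Longrightarrow> (L *\<^sub>v x) $ a = 0"
  and z: "\<And>r. r \<in> R \<Longrightarrow> x $ r = 0" and v: "v < n"
shows "x $ v \<le> 0"
proof -
  have U: "{..<n} \<subseteq> {..<n}" by auto
  obtain i where i: "i \<in> {..<n}" and mx: "\<And>u. u \<in> {..<n} \<Longrightarrow> x $ u \<le> x $ i"
    using exists_max[of "{..<n}" "\<lambda>u. x $ u"] npos by auto
  obtain t where t: "t \<in> R" "(i,t) \<in> E\<^sup>*" using reaches i by auto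
  from path_to_first[OF t(2) t(1)] obtain r' where r': "r' \<in> R"
    and p': "(i,r') \<in> {(a,b). (a,b) \<in> E \<and> a \<in> - R}\<^sup>*" by auto
  have p'': "(i,r') \<in> {(a,b). (a,b) \<in> E \<and> a \<in> {a. a < n \<and> a \<notin> R}}\<^sup>*"
    by (rule rtrancl_mono[THEN subsetD, OF _ p'], auto dest: E_n)
  have "r' \<in> {..<n} \<and> x $ r' = x $ i"
    by (rule lap_prop[OF std x U i mx _ _ p''], insert harm E_n, auto)
  thus ?thesis using z[OF r'] mx v by auto
qed

lemma zero_R: assumes x: "x \<in> carrier_vec n"
  and harm: "\<And>a. a < n \<Longrightarrow> a \<notin> R \<Longrightarrow> (L *\<^sub>v x) $ a = 0"
  and z: "\<And>r. r \<in> R \<Longrightarrow> x $ r = 0"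
shows "x = 0\<^sub>v n"
proof (rule eq_vecI)
  show "dim_vec x = dim_vec (0\<^sub>v n)" using x by auto
  fix v assume "v < dim_vec (0\<^sub>v n)"
  hence v: "v < n" by auto
  have "x $ v \<le> 0" using zero_aux[OF x harm z v] .
  moreover have "(- x) $ v \<le> 0"
  proof (rule zero_aux[OF _ _ _ v])
    show "- x \<in> carrier_vec n" using x by auto
    fix a assume "a < n" "a \<notin> R"
    thus "(L *\<^sub>v - x) $ a = 0" using harm mult_neg_vec[OF Lc x] Lc by auto
  next
    fix r assume "r \<in> R" thus "(- x) $ r = 0" using z Rn x by auto
  qed
  ultimately show "x $ v = 0\<^sub>v n $ v" using v x by auto
qed

end


context lapR begin

definition Mm :: "real mat" where
  "Mm = mat n n (\<lambda>(i,j). if i \<in> R then (if i = j then 1 else 0) else L $$ (i,j))"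

lemma Mm_carrier: "Mm \<in> carrier_mat n n" unfolding Mm_def by auto

lemma Mm_mult: assumes y: "y \<in> carrier_vec n" and i: "i < n"
  shows "(Mm *\<^sub>v y) $ i = (if i \<in> R then y $ i else (L *\<^sub>v y) $ i)"
proof -
  have "(Mm *\<^sub>v y) $ i = (\<Sum>j<n. Mm $$ (i,j) * y $ j)" using mult_vec_sum[OF Mm_carrier y i] .
  also have "\<dots> = (\<Sum>j<n. (if i \<in> R then (if i = j then y $ j else 0) else L $$ (i,j) * y $ j))"
    by (rule sum.cong, auto simp: Mm_def i)
  also have "\<dots> = (if i \<in> R then y $ i else (L *\<^sub>v y) $ i)"
    using mult_vec_sum[OF Lc y i] i by auto
  finally show ?thesis .
qed

lemma det_Mm: "det Mm \<noteq> 0"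
proof
  assume "det Mm = 0"
  from this[unfolded det_0_iff_vec_prod_zero_field[OF Mm_carrier]]
  obtain v where v: "v \<in> carrier_vec n" "v \<noteq> 0\<^sub>v n" "Mm *\<^sub>v v = 0\<^sub>v n" by blast
  have "v = 0\<^sub>v n"
  proof (rule zero_R[OF v(1)])
    fix a assume a: "a < n" "a \<notin> R"
    have "(Mm *\<^sub>v v) $ a = 0" using v(3) a by simp
    thus "(L *\<^sub>v v) $ a = 0" using Mm_mult[OF v(1) a(1)] a by simp
  next
    fix r assume r: "r \<in> R"
    hence rn: "r < n" using Rn by auto
    have "(Mm *\<^sub>v v) $ r = 0" using v(3) rn by simp
    thus "v $ r = 0" using Mm_mult[OF v(1) rn] r by simp
  qed
  with v(2) show False by simp
qed

lemma xv_exists: assumes r: "r \<in> R"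
  shows "\<exists>x. x \<in> carrier_vec n \<and> L *\<^sub>v x = 0\<^sub>v n \<and> (\<forall>r'\<in>R. x $ r' = (if r' = r then 1 else 0))"
proof -
  from det_non_zero_imp_unit[OF Mm_carrier det_Mm, unfolded Units_def, of "()"]
  obtain Mi where Mi: "Mi \<in> carrier_mat n n" and MMi: "Mm * Mi = 1\<^sub>m n"
    by (auto simp: ring_mat_def)
  have rn: "r < n" using r Rn by auto
  define x where "x = Mi *\<^sub>v unit_vec n r"
  have xc: "x \<in> carrier_vec n" unfolding x_def using Mi by auto
  have Mx: "Mm *\<^sub>v x = unit_vec n r" unfolding x_def
    using assoc_mult_mat_vec[OF Mm_carrier Mi, of "unit_vec n r"] MMi by auto
  have Lx: "L *\<^sub>v x = 0\<^sub>v n"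
  proof (rule harm_extend[OF xc])
    fix a assume a: "a < n" "a \<notin> R"
    have "(Mm *\<^sub>v x) $ a = 0" unfolding Mx using a r rn by auto
    thus "(L *\<^sub>v x) $ a = 0" using Mm_mult[OF xc a(1)] a by simp
  qed
  have "\<forall>r'\<in>R. x $ r' = (if r' = r then 1 else 0)"
  proof
    fix r' assume r': "r' \<in> R"
    hence rn': "r' < n" using Rn by auto
    have "(Mm *\<^sub>v x) $ r' = (if r' = r then 1 else 0)" unfolding Mx using rn rn' by simp
    thus "x $ r' = (if r' = r then 1 else 0)" using Mm_mult[OF xc rn'] r' by simp
  qed
  thus ?thesis using xc Lx by blast
qed

definition xv :: "nat \<Rightarrow> real vec" where
  "xv r = (SOME x. x \<in> carrier_vec n \<and> L *\<^sub>v x = 0\<^sub>v n \<and> (\<forall>r'\<in>R. x $ r' = (if r' = r then 1 else 0)))"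

lemma xv: assumes "r \<in> R"
  shows "xv r \<in> carrier_vec n" "L *\<^sub>v xv r = 0\<^sub>v n" "\<And>r'. r' \<in> R \<Longrightarrow> xv r $ r' = (if r' = r then 1 else 0)"
  using someI_ex[OF xv_exists[OF assms]] unfolding xv_def[symmetric] by auto

lemma Lv_index: "x \<in> carrier_vec n \<Longrightarrow> L *\<^sub>v x = 0\<^sub>v n \<Longrightarrow> a < n \<Longrightarrow> (\<Sum>j<n. L $$ (a,j) * x $ j) = 0"
  using mult_vec_sum[OF Lc, of x a] by (metis index_zero_vec(1))

lemma span_R: assumes v: "v \<in> carrier_vec n" and Lv: "L *\<^sub>v v = 0\<^sub>v n" and l: "l < n"
  shows "v $ l = (\<Sum>r\<in>R. v $ r * xv r $ l)"
proof -
  define y where "y = vec n (\<lambda>l. v $ l - (\<Sum>r\<in>R. v $ r * xv r $ l))"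
  have yc: "y \<in> carrier_vec n" unfolding y_def by auto
  have "y = 0\<^sub>v n"
  proof (rule zero_R[OF yc])
    fix a assume a: "a < n" "a \<notin> R"
    have "(L *\<^sub>v y) $ a = (\<Sum>j<n. L $$ (a,j) * y $ j)" using mult_vec_sum[OF Lc yc a(1)] .
    also have "\<dots> = (\<Sum>j<n. L $$ (a,j) * v $ j - (\<Sum>r\<in>R. v $ r * (L $$ (a,j) * xv r $ j)))"
      by (rule sum.cong, auto simp: y_def right_diff_distrib sum_distrib_left algebra_simps)
    also have "\<dots> = (\<Sum>j<n. L $$ (a,j) * v $ j) - (\<Sum>r\<in>R. v $ r * (\<Sum>j<n. L $$ (a,j) * xv r $ j))"
      by (simp add: sum_subtractf sum_distrib_left sum.swap[of _ R])
    also have "\<dots> = 0" using Lv_index[OF v Lv a(1)] Lv_index[OF xv(1) xv(2) a(1)] by simp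
    finally show "(L *\<^sub>v y) $ a = 0" .
  next
    fix r' assume r': "r' \<in> R"
    hence rn': "r' < n" using Rn by auto
    have "(\<Sum>r\<in>R. v $ r * xv r $ r') = (\<Sum>r\<in>R. if r = r' then v $ r' else 0)"
      by (rule sum.cong, auto simp: xv(3) r')
    also have "\<dots> = v $ r'" using r' finR by simp
    finally show "y $ r' = 0" unfolding y_def using rn' by simp
  qed
  hence "y $ l = 0" using l by simp
  thus ?thesis unfolding y_def using l by simp
qed

lemma kernel_dim_L: "kernel_dim L = card R"
proof (rule kernel_dim_pivot[OF Lc finR, of xv id])
  fix i assume "i \<in> R" thus "xv i \<in> mat_kernel L" using xv[of i] by (intro mat_kernelI[OF Lc], auto)
next
  fix i assume "i \<in> R" thus "id i < n" using Rn by auto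
next
  fix i j assume "i \<in> R" "j \<in> R" thus "xv i $ id j = (if i = j then 1 else 0)" using xv(3) by auto
next
  fix v l assume "v \<in> mat_kernel L" "l < n"
  thus "v $ l = (\<Sum>i\<in>R. v $ id i * xv i $ l)" using span_R mat_kernelD[OF Lc] by auto
qed

lemma sign_aux: assumes w: "w \<in> carrier_vec n" and LLw: "L *\<^sub>v (L *\<^sub>v w) = 0\<^sub>v n" and r: "r \<in> R"
  shows "(L *\<^sub>v w) $ r \<ge> 0"
proof -
  define U where "U = {v. (r,v) \<in> E\<^sup>*}"
  have rn: "r < n" using r Rn by auto
  have U: "U \<subseteq> {..<n}" unfolding U_def using Estar_n[OF _ rn] by blast
  have finU: "finite U" using U finite_subset by blast
  have "r \<in> U" unfolding U_def by auto
  then obtain i where i: "i \<in> U" and mx: "\<And>u. u \<in> U \<Longrightarrow> w $ u \<le> w $ i"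
    using exists_max[OF finU, of "\<lambda>u. w $ u"] by blast
  have ri: "(r,i) \<in> E\<^sup>*" using i unfolding U_def by blast
  have iN: "i < n" using i U by blast
  have "(L *\<^sub>v w) $ i \<ge> 0"
  proof (rule lap_local(1)[OF std w iN])
    fix j assume "j < n" "j \<noteq> i" "L $$ (i,j) \<noteq> 0"
    hence "(i,j) \<in> E" using iN by (simp add: digraph_of_iff)
    hence "j \<in> U" using ri unfolding U_def by simp
    thus "w $ j \<le> w $ i" using mx by blast
  qed
  moreover have "(L *\<^sub>v w) $ i = (L *\<^sub>v w) $ r"
  proof (rule const_on_sink[OF _ _ r ri])
    show "L *\<^sub>v w \<in> carrier_vec n" using Lc w by simp
    fix a assume "a < n" thus "(L *\<^sub>v (L *\<^sub>v w)) $ a = 0" using LLw by simp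
  qed
  ultimately show ?thesis by simp
qed

lemma ker_im: assumes w: "w \<in> carrier_vec n" and LLw: "L *\<^sub>v (L *\<^sub>v w) = 0\<^sub>v n"
  shows "L *\<^sub>v w = 0\<^sub>v n"
proof (rule zero_R)
  show zc: "L *\<^sub>v w \<in> carrier_vec n" using Lc w by simp
  fix a assume "a < n" thus "(L *\<^sub>v (L *\<^sub>v w)) $ a = 0" using LLw by simp
next
  fix r assume r: "r \<in> R"
  have "(L *\<^sub>v w) $ r \<ge> 0" using sign_aux[OF w LLw r] .
  moreover have "(L *\<^sub>v (- w)) $ r \<ge> 0"
  proof (rule sign_aux[OF _ _ r])
    show "- w \<in> carrier_vec n" using w by simp
    have "L *\<^sub>v (- w) = - (L *\<^sub>v w)" using mult_neg_vec[OF Lc w] .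
    also have "L *\<^sub>v \<dots> = - (L *\<^sub>v (L *\<^sub>v w))" by (rule mult_neg_vec[OF Lc], insert Lc w, simp)
    finally show "L *\<^sub>v (L *\<^sub>v - w) = 0\<^sub>v n" using LLw by simp
  qed
  moreover have "(L *\<^sub>v (- w)) $ r = - ((L *\<^sub>v w) $ r)"
    using mult_neg_vec[OF Lc w] r Rn Lc by auto
  ultimately show "(L *\<^sub>v w) $ r = 0" by simp
qed

end


lemma Jmat_carrier[simp]: "Jmat n \<in> carrier_mat n n" unfolding Jmat_def by auto
lemma Jmat_dims[simp]: "dim_row (Jmat n) = n" "dim_col (Jmat n) = n" unfolding Jmat_def by auto

lemma J_mult: assumes v: "v \<in> carrier_vec n" and i: "i < n"
  shows "(Jmat n *\<^sub>v v) $ i = (\<Sum>j<n. v $ j) / real n"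
proof -
  have "(Jmat n *\<^sub>v v) $ i = (\<Sum>j<n. Jmat n $$ (i,j) * v $ j)" using mult_vec_sum[OF Jmat_carrier v i] .
  also have "\<dots> = (\<Sum>j<n. v $ j / real n)" by (rule sum.cong, auto simp: Jmat_def i)
  finally show ?thesis by (simp add: sum_divide_distrib)
qed

context lapR begin

lemma L_const: "L *\<^sub>v vec n (\<lambda>_. c) = 0\<^sub>v n"
proof (rule eq_vecI)
  fix a assume "a < dim_vec (0\<^sub>v n)" hence a: "a < n" by simp
  have "(L *\<^sub>v vec n (\<lambda>_. c)) $ a = (\<Sum>j<n. L $$ (a,j) * vec n (\<lambda>_. c) $ j)"
    using mult_vec_sum[OF Lc _ a] by simp
  also have "\<dots> = (\<Sum>j<n. L $$ (a,j)) * c" by (simp add: sum_distrib_right)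
  also have "\<dots> = 0" using std_rowsum[OF std a] by simp
  finally show "(L *\<^sub>v vec n (\<lambda>_. c)) $ a = 0\<^sub>v n $ a" using a by simp
qed (insert Lc, auto)

lemma Pc: "L + Jmat n \<in> carrier_mat n n" using Lc by simp

lemma kerP_iff: assumes v: "v \<in> carrier_vec n"
  shows "(L + Jmat n) *\<^sub>v v = 0\<^sub>v n \<longleftrightarrow> L *\<^sub>v v = 0\<^sub>v n \<and> (\<Sum>j<n. v $ j) = 0"
proof -
  have dist: "(L + Jmat n) *\<^sub>v v = L *\<^sub>v v + Jmat n *\<^sub>v v"
    by (rule add_mult_distrib_mat_vec[OF Lc Jmat_carrier v])
  define s where "s = (\<Sum>j<n. v $ j)"
  show ?thesis
  proof
    assume P0: "(L + Jmat n) *\<^sub>v v = 0\<^sub>v n"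
    have Lv: "L *\<^sub>v v = vec n (\<lambda>_. - (s / real n))"
    proof (rule eq_vecI)
      fix i assume "i < dim_vec (vec n (\<lambda>_. - (s / real n)))" hence i: "i < n" by simp
      have "((L + Jmat n) *\<^sub>v v) $ i = 0" using P0 i by simp
      moreover have "(L *\<^sub>v v + Jmat n *\<^sub>v v) $ i = (L *\<^sub>v v) $ i + (Jmat n *\<^sub>v v) $ i"
        using index_add_vec(1)[of i "Jmat n *\<^sub>v v" "L *\<^sub>v v"] i by (simp add: Jmat_def)
      ultimately have "(L *\<^sub>v v) $ i + (Jmat n *\<^sub>v v) $ i = 0" unfolding dist by simp
      thus "(L *\<^sub>v v) $ i = vec n (\<lambda>_. - (s / real n)) $ i" using J_mult[OF v i] i unfolding s_def by simp
    qed (insert Lc, auto)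
    have "L *\<^sub>v (L *\<^sub>v v) = 0\<^sub>v n" unfolding Lv by (rule L_const)
    from ker_im[OF v this] have L0: "L *\<^sub>v v = 0\<^sub>v n" .
    have "vec n (\<lambda>_. - (s / real n)) $ 0 = 0" using L0 Lv npos by (metis index_zero_vec(1))
    hence "s = 0" using npos by simp
    thus "L *\<^sub>v v = 0\<^sub>v n \<and> (\<Sum>j<n. v $ j) = 0" using L0 s_def by simp
  next
    assume H: "L *\<^sub>v v = 0\<^sub>v n \<and> (\<Sum>j<n. v $ j) = 0"
    show "(L + Jmat n) *\<^sub>v v = 0\<^sub>v n"
    proof (rule eq_vecI)
      fix i assume "i < dim_vec (0\<^sub>v n)" hence i: "i < n" by simp
      show "((L + Jmat n) *\<^sub>v v) $ i = 0\<^sub>v n $ i"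
        unfolding dist using H J_mult[OF v i] i Lc by (simp add: Jmat_def)
    qed (insert Lc, auto)
  qed
qed

definition ssum :: "nat \<Rightarrow> real" where "ssum r = (\<Sum>l<n. xv r $ l)"

lemma ones: assumes l: "l < n" shows "(\<Sum>r\<in>R. xv r $ l) = 1"
proof -
  have "(\<Sum>r\<in>R. xv r $ l) = (\<Sum>r\<in>R. vec n (\<lambda>_. 1) $ r * xv r $ l)"
    by (rule sum.cong, insert Rn, auto)
  also have "\<dots> = 1" using span_R[OF _ L_const[of 1] l] l by simp
  finally show ?thesis .
qed

lemma sum_ssum: "(\<Sum>r\<in>R. ssum r) = real n"
proof -
  have "(\<Sum>r\<in>R. ssum r) = (\<Sum>l<n. \<Sum>r\<in>R. xv r $ l)" unfolding ssum_def by (rule sum.swap)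
  also have "\<dots> = (\<Sum>l<n. 1)" by (rule sum.cong, auto simp: ones)
  finally show ?thesis by simp
qed

lemma r0_exists: "\<exists>r0\<in>R. ssum r0 \<noteq> 0"
proof (rule ccontr)
  assume "\<not> ?thesis"
  hence "(\<Sum>r\<in>R. ssum r) = 0" by simp
  thus False using sum_ssum npos by simp
qed

lemma Lv_lin: assumes x: "x \<in> carrier_vec n" "L *\<^sub>v x = 0\<^sub>v n" and y: "y \<in> carrier_vec n" "L *\<^sub>v y = 0\<^sub>v n"
  shows "L *\<^sub>v vec n (\<lambda>l. x $ l - c * y $ l) = 0\<^sub>v n"
proof (rule eq_vecI)
  fix a assume "a < dim_vec (0\<^sub>v n)" hence a: "a < n" by simp
  have "(L *\<^sub>v vec n (\<lambda>l. x $ l - c * y $ l)) $ a = (\<Sum>j<n. L $$ (a,j) * vec n (\<lambda>l. x $ l - c * y $ l) $ j)"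
    using mult_vec_sum[OF Lc _ a] by simp
  also have "\<dots> = (\<Sum>j<n. L $$ (a,j) * x $ j) - c * (\<Sum>j<n. L $$ (a,j) * y $ j)"
    by (simp add: algebra_simps sum_subtractf sum_distrib_left)
  also have "\<dots> = 0" using Lv_index[OF x a] Lv_index[OF y a] by simp
  finally show "(L *\<^sub>v vec n (\<lambda>l. x $ l - c * y $ l)) $ a = 0\<^sub>v n $ a" using a by simp
qed (insert Lc, auto)

lemma kernel_dim_P: "kernel_dim (L + Jmat n) = card R - 1"
proof -
  obtain r0 where r0: "r0 \<in> R" "ssum r0 \<noteq> 0" using r0_exists by blast
  define f where "f r = vec n (\<lambda>l. xv r $ l - ssum r / ssum r0 * xv r0 $ l)" for r
  have "kernel_dim (L + Jmat n) = card (R - {r0})"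
  proof (rule kernel_dim_pivot[OF Pc, of _ f id])
    show "finite (R - {r0})" using finR by simp
  next
    fix i assume i: "i \<in> R - {r0}"
    have fc: "f i \<in> carrier_vec n" unfolding f_def by simp
    have "L *\<^sub>v f i = 0\<^sub>v n" unfolding f_def by (rule Lv_lin, insert xv i r0, auto)
    moreover have "(\<Sum>j<n. f i $ j) = 0"
    proof -
      have "(\<Sum>j<n. f i $ j) = (\<Sum>j<n. xv i $ j - ssum i / ssum r0 * xv r0 $ j)"
        by (rule sum.cong, auto simp: f_def)
      also have "\<dots> = ssum i - ssum i / ssum r0 * ssum r0"
        unfolding ssum_def by (simp add: sum_subtractf sum_distrib_left)
      finally show ?thesis using r0 by simp
    qed
    ultimately show "f i \<in> mat_kernel (L + Jmat n)"
      using kerP_iff[OF fc] by (intro mat_kernelI[OF Pc fc], auto)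
  next
    fix i assume "i \<in> R - {r0}" thus "id i < n" using Rn by auto
  next
    fix i j assume i: "i \<in> R - {r0}" and j: "j \<in> R - {r0}"
    have jn: "j < n" using j Rn by auto
    show "f i $ id j = (if i = j then 1 else 0)"
      unfolding f_def using jn xv(3)[of i j] xv(3)[of r0 j] i j r0 by auto
  next
    fix v l assume v: "v \<in> mat_kernel (L + Jmat n)" and l: "l < n"
    have vc: "v \<in> carrier_vec n" and Pv: "(L + Jmat n) *\<^sub>v v = 0\<^sub>v n" using mat_kernelD[OF Pc v] by auto
    have Lv: "L *\<^sub>v v = 0\<^sub>v n" and sv: "(\<Sum>j<n. v $ j) = 0" using kerP_iff[OF vc] Pv by auto
    have fin': "finite (R - {r0})" using finR by simp
    have sp: "\<And>l. l < n \<Longrightarrow> v $ l = (\<Sum>r\<in>R. v $ r * xv r $ l)" using span_R[OF vc Lv] by auto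
    have "(\<Sum>r\<in>R. v $ r * ssum r) = (\<Sum>l<n. v $ l)"
      unfolding ssum_def sum_distrib_left
      by (subst sum.swap, rule sum.cong, simp, subst sp, auto)
    hence s0: "(\<Sum>r\<in>R - {r0}. v $ r * ssum r) + v $ r0 * ssum r0 = 0"
      using sv sum.remove[OF finR r0(1), of "\<lambda>r. v $ r * ssum r"] by simp
    have "v $ l = (\<Sum>r\<in>R - {r0}. v $ r * xv r $ l) + v $ r0 * xv r0 $ l"
      using sp[OF l] sum.remove[OF finR r0(1), of "\<lambda>r. v $ r * xv r $ l"] by simp
    also have "v $ r0 = - (\<Sum>r\<in>R - {r0}. v $ r * ssum r) / ssum r0"
      using s0 r0(2) by (simp add: field_simps)
    finally have "v $ l = (\<Sum>r\<in>R - {r0}. v $ r * xv r $ l) - (\<Sum>r\<in>R - {r0}. v $ r * ssum r) / ssum r0 * xv r0 $ l"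
      by simp
    also have "\<dots> = (\<Sum>i\<in>R - {r0}. v $ i * xv i $ l) - (\<Sum>i\<in>R - {r0}. v $ i * (ssum i / ssum r0 * xv r0 $ l))"
    proof -
      have "(\<Sum>r\<in>R - {r0}. v $ r * ssum r) / ssum r0 * xv r0 $ l = (\<Sum>r\<in>R - {r0}. v $ r * ssum r / ssum r0 * xv r0 $ l)"
        by (simp add: sum_divide_distrib sum_distrib_right)
      also have "\<dots> = (\<Sum>i\<in>R - {r0}. v $ i * (ssum i / ssum r0 * xv r0 $ l))"
        by (rule sum.cong, auto)
      finally show ?thesis by simp
    qed
    also have "\<dots> = (\<Sum>i\<in>R - {r0}. v $ i * (xv i $ l - ssum i / ssum r0 * xv r0 $ l))"
      by (simp add: sum_subtractf right_diff_distrib)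
    also have "\<dots> = (\<Sum>i\<in>R - {r0}. v $ id i * f i $ l)"
      by (rule sum.cong, auto simp: f_def l)
    finally show "v $ l = (\<Sum>i\<in>R - {r0}. v $ id i * f i $ l)" .
  qed
  thus ?thesis using r0 finR by simp
qed

end


lemma prod_list_map_upt0: "prod_list (map f [0..<n]) = prod f {..<n}"
  by (induct n) (auto simp: lessThan_Suc mult.commute)

lemma det_diag: fixes d :: "nat \<Rightarrow> 'a :: comm_ring_1"
  shows "det (mat n n (\<lambda>(i,j). if i = j then d j else 0)) = (\<Prod>j<n. d j)"
proof -
  have ut: "upper_triangular (mat n n (\<lambda>(i,j). if i = j then d j else 0))"
    unfolding upper_triangular_def by auto
  have "det (mat n n (\<lambda>(i,j). if i = j then d j else 0)) = prod_list (diag_mat (mat n n (\<lambda>(i,j). if i = j then d j else 0)))"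
    by (rule det_upper_triangular[OF ut], auto)
  also have "\<dots> = (\<Prod>j<n. d j)" unfolding diag_mat_def by (simp add: prod_list_map_upt0)
  finally show ?thesis .
qed

lemma mat_mult_index_sum: assumes "A \<in> carrier_mat n m" "B \<in> carrier_mat m k" "i < n" "j < k"
  shows "(A * B) $$ (i,j) = (\<Sum>l<m. A $$ (i,l) * B $$ (l,j))"
  using assms by (auto simp: scalar_prod_def lessThan_atLeast0 intro!: sum.cong)

context lapR begin

lemma sum_split_R: "(\<Sum>j<n. if j \<in> R then f j else g j) = (\<Sum>j\<in>R. f j) + (\<Sum>j\<in>{..<n} - R. g j)"
proof -
  have a: "{..<n} \<inter> {x. x \<in> R} = R" using Rn by auto
  have b: "{..<n} \<inter> - {x. x \<in> R} = {..<n} - R" by auto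
  show ?thesis using sum.If_cases[of "{..<n}" "\<lambda>j. j \<in> R" f g] unfolding a b by simp
qed

definition Tm :: "real mat" where
  "Tm = mat n n (\<lambda>(i,j). if j \<in> R then xv j $ i else (if i = j then 1 else 0))"

lemma Tm_carrier: "Tm \<in> carrier_mat n n" unfolding Tm_def by auto

lemma Tm_mult: assumes y: "y \<in> carrier_vec n" and i: "i < n"
  shows "(Tm *\<^sub>v y) $ i = (\<Sum>r\<in>R. xv r $ i * y $ r) + (if i \<in> R then 0 else y $ i)"
proof -
  have "(Tm *\<^sub>v y) $ i = (\<Sum>j<n. Tm $$ (i,j) * y $ j)" using mult_vec_sum[OF Tm_carrier y i] .
  also have "\<dots> = (\<Sum>j<n. if j \<in> R then xv j $ i * y $ j else (if i = j then y $ j else 0))"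
    by (rule sum.cong, auto simp: Tm_def i)
  also have "\<dots> = (\<Sum>r\<in>R. xv r $ i * y $ r) + (\<Sum>j\<in>{..<n} - R. (if i = j then y $ j else 0))"
    by (rule sum_split_R)
  also have "(\<Sum>j\<in>{..<n} - R. (if i = j then y $ j else 0)) = (if i \<in> R then 0 else y $ i)"
    using i by (simp add: sum.delta)
  finally show ?thesis .
qed

lemma det_Tm: "det Tm \<noteq> 0"
proof
  assume "det Tm = 0"
  from this[unfolded det_0_iff_vec_prod_zero_field[OF Tm_carrier]]
  obtain y where y: "y \<in> carrier_vec n" "y \<noteq> 0\<^sub>v n" "Tm *\<^sub>v y = 0\<^sub>v n" by blast
  have yR: "y $ r = 0" if r: "r \<in> R" for r
  proof -
    have rn: "r < n" using r Rn by auto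
    have "(\<Sum>r'\<in>R. xv r' $ r * y $ r') = (\<Sum>r'\<in>R. if r' = r then y $ r' else 0)"
      by (rule sum.cong, auto simp: xv(3) r)
    also have "\<dots> = y $ r" using r finR by simp
    finally have "(Tm *\<^sub>v y) $ r = y $ r" using Tm_mult[OF y(1) rn] r by simp
    thus ?thesis using y(3) rn by simp
  qed
  have "y = 0\<^sub>v n"
  proof (rule eq_vecI)
    fix i assume "i < dim_vec (0\<^sub>v n)" hence i: "i < n" by simp
    show "y $ i = 0\<^sub>v n $ i"
    proof (cases "i \<in> R")
      case True thus ?thesis using yR i by simp
    next
      case False
      have "(\<Sum>r\<in>R. xv r $ i * y $ r) = 0" using yR by simp
      hence "(Tm *\<^sub>v y) $ i = y $ i" using Tm_mult[OF y(1) i] False by simp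
      thus ?thesis using y(3) i by simp
    qed
  qed (insert y, auto)
  with y(2) show False by simp
qed

definition Qm :: "real \<Rightarrow> real mat" where
  "Qm lam = mat n n (\<lambda>(i,j). (if i = j then lam else 0) - L $$ (i,j))"

definition Bm :: "real \<Rightarrow> real mat" where
  "Bm lam = mat n n (\<lambda>(i,j). if j \<in> R then xv j $ i else Qm lam $$ (i,j))"

definition Dm :: "real \<Rightarrow> real mat" where
  "Dm lam = mat n n (\<lambda>(i,j). if i = j then (if j \<in> R then lam else 1) else 0)"

lemma Qm_carrier: "Qm lam \<in> carrier_mat n n" unfolding Qm_def by auto
lemma Bm_carrier: "Bm lam \<in> carrier_mat n n" unfolding Bm_def by auto
lemma Dm_carrier: "Dm lam \<in> carrier_mat n n" unfolding Dm_def by auto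

lemma char_Qm: "- char_matrix L lam = Qm lam"
  by (rule eq_matI, insert Lc, auto simp: char_matrix_def Qm_def)

lemma QT_BD: "Qm lam * Tm = Bm lam * Dm lam"
proof (rule eq_matI)
  fix i j assume "i < dim_row (Bm lam * Dm lam)" "j < dim_col (Bm lam * Dm lam)"
  hence i: "i < n" and j: "j < n" by (auto simp: Bm_def Dm_def)
  have rhs: "(Bm lam * Dm lam) $$ (i,j) = Bm lam $$ (i,j) * (if j \<in> R then lam else 1)"
  proof -
    have "(Bm lam * Dm lam) $$ (i,j) = (\<Sum>l<n. Bm lam $$ (i,l) * Dm lam $$ (l,j))"
      by (rule mat_mult_index_sum[OF Bm_carrier Dm_carrier i j])
    also have "\<dots> = (\<Sum>l<n. if l = j then Bm lam $$ (i,l) * (if j \<in> R then lam else 1) else 0)"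
      by (rule sum.cong, auto simp: Dm_def j)
    finally show ?thesis using j by (simp add: sum.delta')
  qed
  have lhs: "(Qm lam * Tm) $$ (i,j) = (\<Sum>l<n. Qm lam $$ (i,l) * Tm $$ (l,j))"
    by (rule mat_mult_index_sum[OF Qm_carrier Tm_carrier i j])
  show "(Qm lam * Tm) $$ (i,j) = (Bm lam * Dm lam) $$ (i,j)"
  proof (cases "j \<in> R")
    case True
    have "(\<Sum>l<n. Qm lam $$ (i,l) * Tm $$ (l,j)) = (\<Sum>l<n. (if i = l then lam * xv j $ l else 0) - L $$ (i,l) * xv j $ l)"
      by (rule sum.cong, auto simp: Qm_def Tm_def i j True left_diff_distrib)
    also have "\<dots> = lam * xv j $ i - (\<Sum>l<n. L $$ (i,l) * xv j $ l)"
      using i by (simp add: sum_subtractf sum.delta)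
    also have "(\<Sum>l<n. L $$ (i,l) * xv j $ l) = 0" using Lv_index[OF xv(1)[OF True] xv(2)[OF True] i] .
    finally show ?thesis unfolding lhs rhs using True by (simp add: Bm_def i j)
  next
    case False
    have "(\<Sum>l<n. Qm lam $$ (i,l) * Tm $$ (l,j)) = (\<Sum>l<n. if l = j then Qm lam $$ (i,l) else 0)"
      by (rule sum.cong, auto simp: Tm_def j False)
    also have "\<dots> = Qm lam $$ (i,j)" using j by (simp add: sum.delta')
    finally show ?thesis unfolding lhs rhs using False by (simp add: Bm_def i j)
  qed
qed (auto simp: Qm_def Tm_def Bm_def Dm_def)

lemma det_Dm: "det (Dm lam) = lam ^ card R"
proof -
  have "det (Dm lam) = (\<Prod>j<n. if j \<in> R then lam else 1)" unfolding Dm_def by (rule det_diag)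
  also have "\<dots> = (\<Prod>j\<in>R. lam)"
  proof -
    have a: "{..<n} \<inter> {x. x \<in> R} = R" using Rn by auto
    show ?thesis using prod.If_cases[of "{..<n}" "\<lambda>j. j \<in> R" "\<lambda>_. lam" "\<lambda>_. 1"] unfolding a by simp
  qed
  finally show ?thesis by simp
qed

lemma det_identity: "poly (char_poly L) lam * det Tm = det (Bm lam) * lam ^ card R"
proof -
  have "poly (char_poly L) lam = det (Qm lam)" using char_poly_matrix[OF Lc, of lam] char_Qm by simp
  hence "poly (char_poly L) lam * det Tm = det (Qm lam * Tm)" using det_mult[OF Qm_carrier Tm_carrier] by simp
  also have "\<dots> = det (Bm lam) * det (Dm lam)" unfolding QT_BD by (rule det_mult[OF Bm_carrier Dm_carrier])
  finally show ?thesis unfolding det_Dm .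
qed

end


context lapR begin

lemma lincomb_ker: "L *\<^sub>v vec n (\<lambda>i. \<Sum>r\<in>R. c r * xv r $ i) = 0\<^sub>v n"
proof (rule eq_vecI)
  fix a assume "a < dim_vec (0\<^sub>v n)" hence a: "a < n" by simp
  have "(L *\<^sub>v vec n (\<lambda>i. \<Sum>r\<in>R. c r * xv r $ i)) $ a = (\<Sum>j<n. L $$ (a,j) * (\<Sum>r\<in>R. c r * xv r $ j))"
    using mult_vec_sum[OF Lc _ a] by simp
  also have "\<dots> = (\<Sum>r\<in>R. c r * (\<Sum>j<n. L $$ (a,j) * xv r $ j))"
    by (simp add: sum_distrib_left sum.swap[of _ R] mult_ac)
  also have "\<dots> = 0" using Lv_index[OF xv(1) xv(2) a] by simp
  finally show "(L *\<^sub>v vec n (\<lambda>i. \<Sum>r\<in>R. c r * xv r $ i)) $ a = 0\<^sub>v n $ a" using a by simp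
qed (insert Lc, auto)

lemma det_Bm0: "det (Bm 0) \<noteq> 0"
proof
  assume "det (Bm 0) = 0"
  from this[unfolded det_0_iff_vec_prod_zero_field[OF Bm_carrier]]
  obtain y where y: "y \<in> carrier_vec n" "y \<noteq> 0\<^sub>v n" "Bm 0 *\<^sub>v y = 0\<^sub>v n" by blast
  define z where "z = vec n (\<lambda>i. \<Sum>r\<in>R. y $ r * xv r $ i)"
  define y' where "y' = vec n (\<lambda>j. if j \<in> R then 0 else y $ j)"
  have zc: "z \<in> carrier_vec n" and y'c: "y' \<in> carrier_vec n" unfolding z_def y'_def by auto
  have Lz: "L *\<^sub>v z = 0\<^sub>v n" unfolding z_def by (rule lincomb_ker)
  have eq: "L *\<^sub>v y' = z"
  proof (rule eq_vecI)
    fix i assume "i < dim_vec z" hence i: "i < n" unfolding z_def by simp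
    have "(Bm 0 *\<^sub>v y) $ i = (\<Sum>j<n. Bm 0 $$ (i,j) * y $ j)" using mult_vec_sum[OF Bm_carrier y(1) i] .
    also have "\<dots> = (\<Sum>j<n. if j \<in> R then xv j $ i * y $ j else - (L $$ (i,j) * y $ j))"
      by (rule sum.cong, auto simp: Bm_def Qm_def i)
    also have "\<dots> = (\<Sum>r\<in>R. xv r $ i * y $ r) + (\<Sum>j\<in>{..<n} - R. - (L $$ (i,j) * y $ j))"
      by (rule sum_split_R)
    finally have 1: "(Bm 0 *\<^sub>v y) $ i = z $ i - (\<Sum>j\<in>{..<n} - R. L $$ (i,j) * y $ j)"
      unfolding z_def using i by (simp add: sum_negf mult.commute)
    have "(L *\<^sub>v y') $ i = (\<Sum>j<n. L $$ (i,j) * y' $ j)" using mult_vec_sum[OF Lc y'c i] .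
    also have "\<dots> = (\<Sum>j<n. if j \<in> R then 0 else L $$ (i,j) * y $ j)"
      by (rule sum.cong, auto simp: y'_def)
    also have "\<dots> = (\<Sum>j\<in>{..<n} - R. L $$ (i,j) * y $ j)"
      using sum_split_R[of "\<lambda>_. 0" "\<lambda>j. L $$ (i,j) * y $ j"] by simp
    finally show "(L *\<^sub>v y') $ i = z $ i" using 1 y(3) i by simp
  qed (insert Lc, auto simp: z_def)
  have "L *\<^sub>v (L *\<^sub>v y') = 0\<^sub>v n" using eq Lz by simp
  from ker_im[OF y'c this] have z0: "z = 0\<^sub>v n" using eq by simp
  have yR: "y $ r = 0" if r: "r \<in> R" for r
  proof -
    have rn: "r < n" using r Rn by auto
    have "(\<Sum>r'\<in>R. y $ r' * xv r' $ r) = (\<Sum>r'\<in>R. if r' = r then y $ r' else 0)"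
      by (rule sum.cong, auto simp: xv(3) r)
    also have "\<dots> = y $ r" using r finR by simp
    finally have "z $ r = y $ r" unfolding z_def using rn by simp
    thus ?thesis using z0 rn by simp
  qed
  have "y' = 0\<^sub>v n"
  proof (rule zero_R[OF y'c])
    fix a assume "a < n" thus "(L *\<^sub>v y') $ a = 0" using eq z0 by simp
  next
    fix r assume "r \<in> R" thus "y' $ r = 0" unfolding y'_def using Rn by auto
  qed
  have "y = 0\<^sub>v n"
  proof (rule eq_vecI)
    fix i assume "i < dim_vec (0\<^sub>v n)" hence i: "i < n" by simp
    show "y $ i = 0\<^sub>v n $ i"
    proof (cases "i \<in> R")
      case True thus ?thesis using yR i by simp
    next
      case False
      have "y' $ i = y $ i" unfolding y'_def using i False by simp
      thus ?thesis using \<open>y' = 0\<^sub>v n\<close> i by simp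
    qed
  qed (insert y, auto)
  with y(2) show False by simp
qed

definition Bp :: "real poly mat" where
  "Bp = mat n n (\<lambda>(i,j). if j \<in> R then [:xv j $ i:] else (if i = j then [:- L $$ (i,j), 1:] else [:- L $$ (i,j):]))"

lemma poly_det_Bp: "poly (det Bp) lam = det (Bm lam)"
  by (rule poly_det_cong[OF Bm_carrier], auto simp: Bp_def Bm_def Qm_def)

lemma alg_mult_L0: "alg_mult L 0 = card R"
proof -
  define k where "k = card R"
  have id: "char_poly L * [:det Tm:] = det Bp * [:0,1:] ^ k"
  proof -
    have "poly (char_poly L * [:det Tm:]) = poly (det Bp * [:0,1:] ^ k)"
    proof
      fix lam
      show "poly (char_poly L * [:det Tm:]) lam = poly (det Bp * [:0,1:] ^ k) lam"
        using det_identity[of lam] poly_det_Bp[of lam] unfolding k_def by (simp add: poly_power mult.commute)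
    qed
    thus ?thesis by (simp add: poly_eq_poly_eq_iff)
  qed
  have b0: "poly (det Bp) 0 \<noteq> 0" using poly_det_Bp det_Bm0 by simp
  hence bnz: "det Bp \<noteq> 0" by auto
  have rnz: "det Bp * [:0,1:] ^ k \<noteq> 0" using bnz by simp
  have "Polynomial.order 0 (det Bp * [:0,1:] ^ k) = Polynomial.order 0 (det Bp) + Polynomial.order (0::real) (([:0,1:] :: real poly) ^ k)"
    using order_mult[OF rnz] by simp
  also have "Polynomial.order 0 (det Bp) = 0" by (rule order_0I[OF b0])
  also have "Polynomial.order (0::real) (([:0,1:] :: real poly) ^ k) = k" using order_power_n_n[of 0 k] by simp
  finally have o1: "Polynomial.order 0 (det Bp * [:0,1:] ^ k) = k" by simp
  have lnz: "char_poly L * [:det Tm:] \<noteq> 0" using rnz id by simp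
  have "Polynomial.order 0 (char_poly L * [:det Tm:]) = Polynomial.order 0 (char_poly L) + Polynomial.order 0 [:det Tm:]"
    using order_mult[OF lnz] by simp
  also have "Polynomial.order 0 [:det Tm:] = 0" by (rule order_0I, insert det_Tm, simp)
  finally show ?thesis unfolding alg_mult_def using o1 id k_def by simp
qed

end


lemma wc_iff: "C \<in> weak_components n F \<longleftrightarrow> (\<exists>x<n. C = ((F \<union> F\<inverse>)\<^sup>*) `` {x})"
  unfolding weak_components_def quotient_def by auto

lemma sym_S: "(a,b) \<in> (F \<union> F\<inverse>)\<^sup>* \<Longrightarrow> (b,a) \<in> (F \<union> F\<inverse>)\<^sup>*"
proof -
  have "sym ((F \<union> F\<inverse>)\<^sup>*)" by (rule sym_rtrancl, auto simp: sym_def)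
  thus "(a,b) \<in> (F \<union> F\<inverse>)\<^sup>* \<Longrightarrow> (b,a) \<in> (F \<union> F\<inverse>)\<^sup>*" unfolding sym_def by blast
qed

lemma class_eq: assumes "y \<in> ((F \<union> F\<inverse>)\<^sup>*) `` {x}"
  shows "((F \<union> F\<inverse>)\<^sup>*) `` {y} = ((F \<union> F\<inverse>)\<^sup>*) `` {x}"
proof -
  have xy: "(x,y) \<in> (F \<union> F\<inverse>)\<^sup>*" using assms by auto
  have yx: "(y,x) \<in> (F \<union> F\<inverse>)\<^sup>*" using sym_S[OF xy] .
  show ?thesis
  proof (intro equalityI subsetI)
    fix z assume "z \<in> ((F \<union> F\<inverse>)\<^sup>*) `` {y}"
    thus "z \<in> ((F \<union> F\<inverse>)\<^sup>*) `` {x}" using xy by (auto intro: rtrancl_trans)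
  next
    fix z assume "z \<in> ((F \<union> F\<inverse>)\<^sup>*) `` {x}"
    thus "z \<in> ((F \<union> F\<inverse>)\<^sup>*) `` {y}" using yx by (auto intro: rtrancl_trans)
  qed
qed

lemma S_n: assumes F: "F \<subseteq> {..<n} \<times> {..<n}" and p: "(a,b) \<in> (F \<union> F\<inverse>)\<^sup>*" and a: "a < n"
  shows "b < n"
  using p a by (induction rule: rtrancl_induct, insert F, auto)

lemma class_closed_path:
  assumes p: "(u,v) \<in> (F \<union> F\<inverse>)\<^sup>*" and u: "u \<in> C" and C: "C = ((F \<union> F\<inverse>)\<^sup>*) `` {x}"
  shows "(u,v) \<in> ((F \<inter> C \<times> C) \<union> (F \<inter> C \<times> C)\<inverse>)\<^sup>* \<and> v \<in> C"
  using p
proof (induction rule: rtrancl_induct)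
  case base thus ?case using u by auto
next
  case (step a b)
  hence a: "a \<in> C" and ua: "(u,a) \<in> ((F \<inter> C \<times> C) \<union> (F \<inter> C \<times> C)\<inverse>)\<^sup>*" by auto
  have "(x,a) \<in> (F \<union> F\<inverse>)\<^sup>*" using a C by auto
  hence "(x,b) \<in> (F \<union> F\<inverse>)\<^sup>*" using step(2) by (meson rtrancl.rtrancl_into_rtrancl)
  hence b: "b \<in> C" using C by auto
  have "(a,b) \<in> (F \<inter> C \<times> C) \<union> (F \<inter> C \<times> C)\<inverse>" using step(2) a b by auto
  thus ?case using ua b by (meson rtrancl.rtrancl_into_rtrancl)
qed

lemma class_closed_Fpath:
  assumes p: "(u,v) \<in> F\<^sup>*" and u: "u \<in> C" and C: "C = ((F \<union> F\<inverse>)\<^sup>*) `` {x}"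
  shows "(u,v) \<in> (F \<inter> C \<times> C)\<^sup>* \<and> v \<in> C"
  using p
proof (induction rule: rtrancl_induct)
  case base thus ?case using u by auto
next
  case (step a b)
  hence a: "a \<in> C" and ua: "(u,a) \<in> (F \<inter> C \<times> C)\<^sup>*" by auto
  have "(x,a) \<in> (F \<union> F\<inverse>)\<^sup>*" using a C by auto
  moreover have "(a,b) \<in> F \<union> F\<inverse>" using step(2) by auto
  ultimately have "(x,b) \<in> (F \<union> F\<inverse>)\<^sup>*" by (meson rtrancl.rtrancl_into_rtrancl)
  hence b: "b \<in> C" using C by auto
  have "(a,b) \<in> F \<inter> C \<times> C" using step(2) a b by auto
  thus ?case using ua b by (meson rtrancl.rtrancl_into_rtrancl)
qed

lemma wc_finite: assumes F: "F \<subseteq> {..<n} \<times> {..<n}" and C: "C \<in> weak_components n F"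
  shows "C \<subseteq> {..<n}"
  using C S_n[OF F] unfolding wc_iff by auto

lemma forest_to_reaching:
  assumes E: "E \<subseteq> {..<n} \<times> {..<n}" and IF: "in_forest n E F"
  shows "\<exists>R. reaching n E R \<and> card R = card (weak_components n F)"
proof -
  define W where "W = weak_components n F"
  have FE: "F \<subseteq> E" using IF unfolding in_forest_def by auto
  hence F: "F \<subseteq> {..<n} \<times> {..<n}" using E by auto
  have ct: "\<And>C. C \<in> W \<Longrightarrow> converging_tree C (F \<inter> C \<times> C)" using IF unfolding in_forest_def W_def by auto
  define rho where "rho C = (SOME r. r \<in> C \<and> (\<forall>v\<in>C. (v, r) \<in> (F \<inter> C \<times> C)\<^sup>*))" for C
  have rho: "rho C \<in> C \<and> (\<forall>v\<in>C. (v, rho C) \<in> (F \<inter> C \<times> C)\<^sup>*)" if C: "C \<in> W" for C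
  proof -
    have "\<exists>r. r \<in> C \<and> (\<forall>v\<in>C. (v, r) \<in> (F \<inter> C \<times> C)\<^sup>*)" using ct[OF C] unfolding converging_tree_def by auto
    from someI_ex[OF this] show ?thesis unfolding rho_def .
  qed
  have inj: "inj_on rho W"
  proof
    fix C C' assume C: "C \<in> W" and C': "C' \<in> W" and eq: "rho C = rho C'"
    obtain x where x: "C = ((F \<union> F\<inverse>)\<^sup>*) `` {x}" using C unfolding W_def wc_iff by auto
    obtain x' where x': "C' = ((F \<union> F\<inverse>)\<^sup>*) `` {x'}" using C' unfolding W_def wc_iff by auto
    have "rho C \<in> C" "rho C \<in> C'" using rho[OF C] rho[OF C'] eq by auto
    thus "C = C'" using class_eq[of "rho C" F x] class_eq[of "rho C" F x'] x x' by auto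
  qed
  define R where "R = rho ` W"
  have "reaching n E R"
    unfolding reaching_def
  proof (intro conjI allI impI)
    show "R \<subseteq> {..<n}"
    proof
      fix r assume "r \<in> R"
      then obtain C where C: "C \<in> W" "r = rho C" unfolding R_def by auto
      thus "r \<in> {..<n}" using rho[OF C(1)] wc_finite[OF F, of C] W_def by auto
    qed
    fix v assume v: "v < n"
    define C where "C = ((F \<union> F\<inverse>)\<^sup>*) `` {v}"
    have C: "C \<in> W" unfolding W_def wc_iff C_def using v by auto
    have "v \<in> C" unfolding C_def by auto
    hence "(v, rho C) \<in> (F \<inter> C \<times> C)\<^sup>*" using rho[OF C] by auto
    hence "(v, rho C) \<in> E\<^sup>*" by (rule rtrancl_mono[THEN subsetD, rotated], insert FE, auto)
    thus "\<exists>r\<in>R. (v, r) \<in> E\<^sup>*" using C unfolding R_def by auto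
  qed
  moreover have "card R = card W" unfolding R_def by (rule card_image[OF inj])
  ultimately show ?thesis unfolding W_def by auto
qed


locale fconstr =
  fixes n :: nat and E :: "(nat \<times> nat) set" and R :: "nat set"
  assumes E: "E \<subseteq> {..<n} \<times> {..<n}"
    and reachR: "reaching n E R"
begin

lemma Rn: "R \<subseteq> {..<n}" using reachR unfolding reaching_def by auto

definition dist :: "nat \<Rightarrow> nat" where
  "dist v = (LEAST k. \<exists>r\<in>R. (v,r) \<in> E ^^ k)"

lemma dist_ex: assumes v: "v < n" shows "\<exists>r\<in>R. (v,r) \<in> E ^^ dist v"
proof -
  obtain r where r: "r \<in> R" "(v,r) \<in> E\<^sup>*" using reachR v unfolding reaching_def by auto
  then obtain k where "(v,r) \<in> E ^^ k" using rtrancl_power by blast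
  hence "\<exists>k. \<exists>r\<in>R. (v,r) \<in> E ^^ k" using r by auto
  from LeastI_ex[OF this] show ?thesis unfolding dist_def .
qed

lemma dist_le: "r \<in> R \<Longrightarrow> (v,r) \<in> E ^^ k \<Longrightarrow> dist v \<le> k"
  unfolding dist_def by (rule Least_le, auto)

lemma nxt_ex: assumes v: "v < n" "v \<notin> R"
  shows "\<exists>w. (v,w) \<in> E \<and> dist w < dist v"
proof -
  obtain r where r: "r \<in> R" "(v,r) \<in> E ^^ dist v" using dist_ex[OF v(1)] by auto
  show ?thesis
  proof (cases "dist v")
    case 0 thus ?thesis using r v by auto
  next
    case (Suc m)
    then obtain w where w: "(v,w) \<in> E" "(w,r) \<in> E ^^ m" using r relpow_Suc_D2 by metis
    have "dist w \<le> m" using dist_le[OF r(1) w(2)] .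
    thus ?thesis using w Suc by auto
  qed
qed

definition nxt :: "nat \<Rightarrow> nat" where
  "nxt v = (SOME w. (v,w) \<in> E \<and> dist w < dist v)"

lemma nxt: "v < n \<Longrightarrow> v \<notin> R \<Longrightarrow> (v, nxt v) \<in> E \<and> dist (nxt v) < dist v"
  unfolding nxt_def by (rule someI_ex, rule nxt_ex)

definition F :: "(nat \<times> nat) set" where
  "F = {(v, nxt v) | v. v < n \<and> v \<notin> R}"

lemma F_iff: "(a,b) \<in> F \<longleftrightarrow> a < n \<and> a \<notin> R \<and> b = nxt a" unfolding F_def by auto

lemma FE: "F \<subseteq> E" using nxt unfolding F_def by auto
lemma Fn: "F \<subseteq> {..<n} \<times> {..<n}" using FE E by auto

lemma toR: "v < n \<Longrightarrow> \<exists>r\<in>R. (v,r) \<in> F\<^sup>*"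
proof (induction "dist v" arbitrary: v rule: less_induct)
  case less
  show ?case
  proof (cases "v \<in> R")
    case True thus ?thesis by auto
  next
    case False
    have vw: "(v, nxt v) \<in> F" using less(2) False unfolding F_iff by auto
    have w: "nxt v < n" "dist (nxt v) < dist v" using nxt[OF less(2) False] E by auto
    obtain r where "r \<in> R" "(nxt v, r) \<in> F\<^sup>*" using less(1)[OF w(2) w(1)] by auto
    thus ?thesis using vw by (meson converse_rtrancl_into_rtrancl)
  qed
qed

lemma R_noout: "r \<in> R \<Longrightarrow> (r,b) \<notin> F" unfolding F_iff by auto

lemma root_unique: assumes p1: "(v,r1) \<in> F\<^sup>*" and r1: "r1 \<in> R" and p2: "(v,r2) \<in> F\<^sup>*" and r2: "r2 \<in> R"
  shows "r1 = r2"
  using p1 p2 r2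
proof (induction arbitrary: r2 rule: converse_rtrancl_induct)
  case base
  thus ?case using r1 R_noout by (metis converse_rtranclE)
next
  case (step v w)
  have "v = r2 \<or> (\<exists>w'. (v,w') \<in> F \<and> (w',r2) \<in> F\<^sup>*)" using step(4) by (meson converse_rtranclE)
  thus ?case
  proof
    assume "v = r2" hence "(r2,w) \<in> F" using step(1) by simp
    thus ?thesis using R_noout[OF step(5)] by simp
  next
    assume "\<exists>w'. (v,w') \<in> F \<and> (w',r2) \<in> F\<^sup>*"
    then obtain w' where w': "(v,w') \<in> F" "(w',r2) \<in> F\<^sup>*" by auto
    have "w' = w" using w'(1) step(1) unfolding F_iff by auto
    thus ?thesis using w'(2) step(3) step(5) by auto
  qed
qed

definition rootF :: "nat \<Rightarrow> nat" where
  "rootF v = (THE r. r \<in> R \<and> (v,r) \<in> F\<^sup>*)"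

lemma rootF: assumes "v < n" shows "rootF v \<in> R \<and> (v, rootF v) \<in> F\<^sup>*"
proof -
  obtain r where r: "r \<in> R" "(v,r) \<in> F\<^sup>*" using toR[OF assms] by auto
  have "\<exists>!r. r \<in> R \<and> (v,r) \<in> F\<^sup>*" using r root_unique by blast
  from theI'[OF this] show ?thesis unfolding rootF_def .
qed

lemma rootF_eq: assumes "r \<in> R" "(v,r) \<in> F\<^sup>*" "v < n" shows "rootF v = r"
  using root_unique[OF _ _ assms(2,1)] rootF[OF assms(3)] by auto

lemma rootF_R: "r \<in> R \<Longrightarrow> rootF r = r" using rootF_eq[of r r] Rn by auto

lemma rootF_step: assumes "(a,b) \<in> F" shows "rootF a = rootF b"
proof -
  have ab: "a < n" "b < n" using assms Fn by auto
  have "(a, rootF b) \<in> F\<^sup>*" using assms rootF[OF ab(2)] by (meson converse_rtrancl_into_rtrancl)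
  thus ?thesis using rootF_eq[OF _ _ ab(1)] rootF[OF ab(2)] by auto
qed

lemma rootF_S: assumes p: "(a,b) \<in> (F \<union> F\<inverse>)\<^sup>*" shows "rootF a = rootF b"
  using p by (induction rule: rtrancl_induct, auto dest: rootF_step)

abbreviation "S \<equiv> (F \<union> F\<inverse>)\<^sup>*"

lemma F_in_S: "(a,b) \<in> F\<^sup>* \<Longrightarrow> (a,b) \<in> S"
  by (rule rtrancl_mono[THEN subsetD, rotated], auto)

lemma class_root: assumes C: "C \<in> weak_components n F"
  shows "\<exists>r. C \<inter> R = {r} \<and> C = S `` {r}"
proof -
  obtain x where x: "x < n" "C = S `` {x}" using C unfolding wc_iff by auto
  define r where "r = rootF x"
  have r: "r \<in> R" "(x,r) \<in> F\<^sup>*" using rootF[OF x(1)] r_def by auto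
  have rC: "r \<in> C" using F_in_S[OF r(2)] x(2) by auto
  have "C \<inter> R = {r}"
  proof (intro equalityI subsetI)
    fix r' assume r': "r' \<in> C \<inter> R"
    hence "(x,r') \<in> S" using x by auto
    hence "rootF x = rootF r'" by (rule rootF_S)
    thus "r' \<in> {r}" using rootF_R r' r_def by auto
  qed (insert rC r, auto)
  moreover have "C = S `` {r}" using class_eq[of r F x] rC x by auto
  ultimately show ?thesis by auto
qed

lemma forest: "in_forest n E F"
  unfolding in_forest_def
proof (intro conjI ballI)
  show "F \<subseteq> E" by (rule FE)
  fix C assume C: "C \<in> weak_components n F"
  obtain r where r: "C \<inter> R = {r}" "C = S `` {r}" using class_root[OF C] by auto
  have Cn: "C \<subseteq> {..<n}" by (rule wc_finite[OF Fn C])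
  have rC: "r \<in> C" "r \<in> R" using r by auto
  define T where "T = F \<inter> C \<times> C"
  have T_eq: "T = (\<lambda>v. (v, nxt v)) ` (C - R)"
  proof (intro equalityI subsetI)
    fix e assume e: "e \<in> T"
    then obtain a b where ab: "e = (a,b)" "(a,b) \<in> F" "a \<in> C" by (auto simp: T_def)
    thus "e \<in> (\<lambda>v. (v, nxt v)) ` (C - R)" unfolding F_iff by auto
  next
    fix e assume "e \<in> (\<lambda>v. (v, nxt v)) ` (C - R)"
    then obtain v where v: "v \<in> C" "v \<notin> R" "e = (v, nxt v)" by auto
    have vF: "(v, nxt v) \<in> F" using v Cn unfolding F_iff by auto
    hence "(v, nxt v) \<in> F\<^sup>*" by auto
    hence "nxt v \<in> C" using class_closed_Fpath[OF _ v(1) r(2)] by auto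
    thus "e \<in> T" unfolding T_def using v vF by auto
  qed
  have finC: "finite C" using Cn finite_subset by blast
  have "card T = card (C - R)" unfolding T_eq by (rule card_image, auto simp: inj_on_def)
  also have "C - R = C - {r}" using r by auto
  also have "card (C - {r}) = card C - 1" using rC finC by simp
  finally have cardT: "card T = card C - 1" .
  show "converging_tree C (F \<inter> C \<times> C)"
    unfolding converging_tree_def T_def[symmetric]
  proof (intro conjI)
    show "finite C" by (rule finC)
    show "C \<noteq> {}" using rC by auto
    show "T \<subseteq> C \<times> C" unfolding T_def by auto
    show "card T = card C - 1" by (rule cardT)
    show "\<forall>u\<in>C. \<forall>v\<in>C. (u, v) \<in> (T \<union> T\<inverse>)\<^sup>*"
    proof (intro ballI)
      fix u v assume u: "u \<in> C" and v: "v \<in> C"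
      have "(r,u) \<in> S" "(r,v) \<in> S" using u v r by auto
      hence "(u,v) \<in> S" using sym_S by (meson rtrancl_trans)
      thus "(u, v) \<in> (T \<union> T\<inverse>)\<^sup>*" using class_closed_path[OF _ u r(2)] unfolding T_def by auto
    qed
    show "\<exists>r\<in>C. \<forall>v\<in>C. (v, r) \<in> T\<^sup>*"
    proof (intro bexI[of _ r] ballI)
      fix v assume v: "v \<in> C"
      have vn: "v < n" using v Cn by auto
      have "(r,v) \<in> S" using v r by auto
      hence "rootF v = rootF r" using rootF_S sym_S by metis
      hence "rootF v = r" using rootF_R rC by auto
      hence "(v, r) \<in> F\<^sup>*" using rootF[OF vn] by auto
      thus "(v, r) \<in> T\<^sup>*" using class_closed_Fpath[OF _ v r(2)] unfolding T_def by auto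
    qed (rule rC(1))
  qed
qed

lemma card_wc: "card (weak_components n F) = card R"
proof -
  have eq: "weak_components n F = (\<lambda>r. S `` {r}) ` R"
  proof (intro equalityI subsetI)
    fix C assume C: "C \<in> weak_components n F"
    obtain r where r: "C \<inter> R = {r}" "C = S `` {r}" using class_root[OF C] by auto
    thus "C \<in> (\<lambda>r. S `` {r}) ` R" by auto
  next
    fix C assume "C \<in> (\<lambda>r. S `` {r}) ` R"
    then obtain r where "r \<in> R" "C = S `` {r}" by auto
    thus "C \<in> weak_components n F" unfolding wc_iff using Rn by auto
  qed
  have inj: "inj_on (\<lambda>r. S `` {r}) R"
  proof
    fix r1 r2 assume r: "r1 \<in> R" "r2 \<in> R" and eq: "S `` {r1} = S `` {r2}"
    have "r2 \<in> S `` {r1}" using eq by auto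
    hence "rootF r1 = rootF r2" using rootF_S by auto
    thus "r1 = r2" using rootF_R r by auto
  qed
  show ?thesis unfolding eq by (rule card_image[OF inj])
qed

end

lemma in_forest_dim_eq:
  assumes E: "E \<subseteq> {..<n} \<times> {..<n}" and R: "reaching n E R"
    and minR: "\<And>R'. reaching n E R' \<Longrightarrow> card R \<le> card R'"
  shows "in_forest_dim n E = card R"
proof -
  define Sset where "Sset = {card (weak_components n F) | F. in_forest n E F}"
  interpret fconstr n E R by (unfold_locales, rule E, rule R)
  have "card R = card (weak_components n F)" using card_wc by simp
  hence mem: "card R \<in> Sset" unfolding Sset_def using forest by blast
  have bound: "\<And>s. s \<in> Sset \<Longrightarrow> card R \<le> s \<and> s \<le> n"
  proof -
    fix s assume "s \<in> Sset"
    then obtain F' where F': "in_forest n E F'" "s = card (weak_components n F')" unfolding Sset_def by auto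
    obtain R' where R': "reaching n E R'" "card R' = s" using forest_to_reaching[OF E F'(1)] F' by auto
    have "card R' \<le> card {..<n}" using R' unfolding reaching_def by (intro card_mono, auto)
    thus "card R \<le> s \<and> s \<le> n" using minR[OF R'(1)] R' by auto
  qed
  have sub: "Sset \<subseteq> {..n}"
  proof
    fix s assume "s \<in> Sset" thus "s \<in> {..n}" using bound by simp
  qed
  have fin: "finite Sset" by (rule finite_subset[OF sub], simp)
  have "Min Sset = card R"
    by (rule Min_eqI[OF fin], simp add: bound, rule mem)
  thus ?thesis unfolding in_forest_dim_def Sset_def by simp
qed


lemma pcompose_power_left: "pcompose (d ^ m) r = (pcompose d r) ^ m"
  by (induct m) (auto simp: pcompose_mult)

lemma order_reflect_le: fixes p :: "real poly"
  assumes nz: "pcompose p [:b, -1:] \<noteq> 0"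
  shows "Polynomial.order (b - a) p \<le> Polynomial.order a (pcompose p [:b, -1:])"
proof -
  define m where "m = Polynomial.order (b - a) p"
  have "[:-(b - a), 1:] ^ m dvd p" unfolding m_def by (rule order_1)
  then obtain e where pe: "p = [:-(b - a), 1:] ^ m * e" by (auto elim: dvdE)
  have lin: "pcompose [:-(b - a), 1:] [:b, -1:] = Polynomial.smult (-1) [:-a, 1:]"
    by (simp add: pcompose_pCons)
  have "pcompose p [:b, -1:] = (Polynomial.smult (-1) [:-a, 1:]) ^ m * pcompose e [:b, -1:]"
    unfolding pe pcompose_mult pcompose_power_left lin ..
  also have "(Polynomial.smult (-1) [:-a, 1:]) ^ m = Polynomial.smult ((-1) ^ m) ([:-a, 1:] ^ m)"
    by (rule smult_power)
  finally have "[:-a, 1:] ^ m dvd pcompose p [:b, -1:]"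
    by (metis dvd_smult dvd_triv_left mult_smult_left)
  thus ?thesis using nz unfolding m_def by (simp add: order_divides)
qed

lemma pcompose_refl_twice: "pcompose (pcompose p [:b, -1:]) [:b, -1::real:] = p"
proof -
  have "pcompose [:b, -1:] [:b, -1::real:] = [:0, 1:]" by (simp add: pcompose_pCons)
  thus ?thesis by (metis pcompose_assoc pcompose_idR)
qed

lemma order_reflect: fixes p :: "real poly"
  assumes nz: "p \<noteq> 0"
  shows "Polynomial.order a (pcompose p [:b, -1:]) = Polynomial.order (b - a) p"
proof -
  have nz': "pcompose p [:b, -1:] \<noteq> 0" using nz pcompose_refl_twice[of p b] by auto
  have 1: "Polynomial.order (b - a) p \<le> Polynomial.order a (pcompose p [:b, -1:])"
    by (rule order_reflect_le[OF nz'])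
  have "Polynomial.order (b - (b - a)) (pcompose p [:b, -1:]) \<le> Polynomial.order (b - a) (pcompose (pcompose p [:b, -1:]) [:b, -1:])"
    by (rule order_reflect_le, unfold pcompose_refl_twice, rule nz)
  hence 2: "Polynomial.order a (pcompose p [:b, -1:]) \<le> Polynomial.order (b - a) p"
    unfolding pcompose_refl_twice by simp
  from 1 2 show ?thesis by simp
qed

lemma char_poly_nz: "A \<in> carrier_mat n n \<Longrightarrow> char_poly A \<noteq> 0"
  using degree_monic_char_poly[of A n] by auto

lemma char_matrix_neg: assumes A: "(A :: real mat) \<in> carrier_mat n n"
  shows "- char_matrix A lam = mat n n (\<lambda>(i,j). (if i = j then lam else 0) - A $$ (i,j))"
  by (rule eq_matI, insert A, auto simp: char_matrix_def)

lemma poly_char: assumes A: "(A :: real mat) \<in> carrier_mat n n"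
  shows "poly (char_poly A) lam = det (mat n n (\<lambda>(i,j). (if i = j then lam else 0) - A $$ (i,j)))"
  using char_poly_matrix[OF A, of lam] char_matrix_neg[OF A] by simp

lemma alg_mult_reflect: assumes A: "A \<in> carrier_mat n n"
  shows "alg_mult (1\<^sub>m n - A) ev = alg_mult A (1 - ev)"
proof -
  have B: "1\<^sub>m n - A \<in> carrier_mat n n" using A by (rule minus_carrier_mat)
  have "char_poly (1\<^sub>m n - A) = Polynomial.smult ((-1) ^ n) (pcompose (char_poly A) [:1, -1:])"
  proof -
    have "poly (char_poly (1\<^sub>m n - A)) = poly (Polynomial.smult ((-1) ^ n) (pcompose (char_poly A) [:1, -1:]))"
    proof
      fix lam
      have "poly (char_poly (1\<^sub>m n - A)) lam = det (mat n n (\<lambda>(i,j). (if i = j then lam else 0) - (1\<^sub>m n - A) $$ (i,j)))"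
        by (rule poly_char[OF B])
      also have "mat n n (\<lambda>(i,j). (if i = j then lam else 0) - (1\<^sub>m n - A) $$ (i,j))
        = (-1) \<cdot>\<^sub>m mat n n (\<lambda>(i,j). (if i = j then 1 - lam else 0) - A $$ (i,j))"
        by (rule eq_matI, insert A, auto)
      also have "det \<dots> = (-1) ^ n * poly (char_poly A) (1 - lam)"
        using poly_char[OF A, of "1 - lam"] by simp
      finally show "poly (char_poly (1\<^sub>m n - A)) lam = poly (Polynomial.smult ((-1) ^ n) (pcompose (char_poly A) [:1, -1:])) lam"
        by (simp add: poly_pcompose)
    qed
    thus ?thesis by (simp add: poly_eq_poly_eq_iff)
  qed
  hence "alg_mult (1\<^sub>m n - A) ev = Polynomial.order ev (pcompose (char_poly A) [:1, -1:])"
    unfolding alg_mult_def by (simp add: order_smult)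
  also have "\<dots> = Polynomial.order (1 - ev) (char_poly A)" by (rule order_reflect[OF char_poly_nz[OF A]])
  finally show ?thesis unfolding alg_mult_def .
qed


lemma Jmat_index[simp]: "i < n \<Longrightarrow> j < n \<Longrightarrow> Jmat n $$ (i,j) = 1 / real n"
  unfolding Jmat_def by simp

definition Sm :: "nat \<Rightarrow> real mat" where
  "Sm n = mat n n (\<lambda>(i,j). if j = 0 then 1 else if i = j then 1 else if i = 0 then -1 else 0)"

definition Cm :: "nat \<Rightarrow> real mat \<Rightarrow> real mat" where
  "Cm n Q = mat n n (\<lambda>(i,j). if j = 0 then 1 else Q $$ (i,j) - Q $$ (i,0))"

definition Dm1 :: "nat \<Rightarrow> real \<Rightarrow> real mat" where
  "Dm1 n c = mat n n (\<lambda>(i,j). if i = j then (if j = 0 then c else 1) else 0)"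

lemma QS: assumes Q: "Q \<in> carrier_mat n n" and rs: "\<And>i. i < n \<Longrightarrow> (\<Sum>k<n. Q $$ (i,k)) = c"
  shows "Q * Sm n = Cm n Q * Dm1 n c"
proof (rule eq_matI)
  fix i j assume "i < dim_row (Cm n Q * Dm1 n c)" "j < dim_col (Cm n Q * Dm1 n c)"
  hence i: "i < n" and j: "j < n" by (auto simp: Cm_def Dm1_def)
  have Sc: "Sm n \<in> carrier_mat n n" unfolding Sm_def by auto
  have Cc: "Cm n Q \<in> carrier_mat n n" unfolding Cm_def by auto
  have Dc: "Dm1 n c \<in> carrier_mat n n" unfolding Dm1_def by auto
  have rhs: "(Cm n Q * Dm1 n c) $$ (i,j) = Cm n Q $$ (i,j) * (if j = 0 then c else 1)"
  proof -
    have "(Cm n Q * Dm1 n c) $$ (i,j) = (\<Sum>l<n. Cm n Q $$ (i,l) * Dm1 n c $$ (l,j))"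
      by (rule mat_mult_index_sum[OF Cc Dc i j])
    also have "\<dots> = (\<Sum>l<n. if l = j then Cm n Q $$ (i,l) * (if j = 0 then c else 1) else 0)"
      by (rule sum.cong, auto simp: Dm1_def j)
    finally show ?thesis using j by (simp add: sum.delta')
  qed
  have lhs: "(Q * Sm n) $$ (i,j) = (\<Sum>l<n. Q $$ (i,l) * Sm n $$ (l,j))"
    by (rule mat_mult_index_sum[OF Q Sc i j])
  show "(Q * Sm n) $$ (i,j) = (Cm n Q * Dm1 n c) $$ (i,j)"
  proof (cases "j = 0")
    case True
    have "(\<Sum>l<n. Q $$ (i,l) * Sm n $$ (l,j)) = (\<Sum>l<n. Q $$ (i,l))"
      by (rule sum.cong, auto simp: Sm_def True)
    thus ?thesis unfolding lhs rhs using rs[OF i] True i by (simp add: Cm_def)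
  next
    case False
    have "(\<Sum>l<n. Q $$ (i,l) * Sm n $$ (l,j)) = (\<Sum>l<n. (if l = j then Q $$ (i,l) else 0) - (if l = 0 then Q $$ (i,l) else 0))"
      by (rule sum.cong, auto simp: Sm_def j False)
    also have "\<dots> = Q $$ (i,j) - Q $$ (i,0)" using j False by (simp add: sum_subtractf sum.delta')
    finally show ?thesis unfolding lhs rhs using False i j by (simp add: Cm_def)
  qed
qed (insert Q, auto simp: Sm_def Cm_def Dm1_def)

lemma det_Sm: assumes n: "n > 0" shows "det (Sm n) \<noteq> 0"
proof
  have Sc: "Sm n \<in> carrier_mat n n" unfolding Sm_def by auto
  assume "det (Sm n) = 0"
  from this[unfolded det_0_iff_vec_prod_zero_field[OF Sc]]
  obtain y where y: "y \<in> carrier_vec n" "y \<noteq> 0\<^sub>v n" "Sm n *\<^sub>v y = 0\<^sub>v n" by blast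
  have row: "(Sm n *\<^sub>v y) $ i = (\<Sum>j<n. Sm n $$ (i,j) * y $ j)" if "i < n" for i
    using mult_vec_sum[OF Sc y(1) that] .
  have yi: "y $ i = - y $ 0" if i: "i < n" "i \<noteq> 0" for i
  proof -
    have "(\<Sum>j<n. Sm n $$ (i,j) * y $ j) = (\<Sum>j<n. (if j = 0 then y $ j else 0) + (if j = i then y $ j else 0))"
      by (rule sum.cong, auto simp: Sm_def i)
    also have "\<dots> = y $ 0 + y $ i" using i n by (simp add: sum.distrib sum.delta')
    finally have "(Sm n *\<^sub>v y) $ i = y $ 0 + y $ i" using row[OF i(1)] by simp
    thus ?thesis using y(3) i by simp
  qed
  have "(\<Sum>j<n. Sm n $$ (0,j) * y $ j) = (\<Sum>j<n. if j = 0 then y $ 0 else y $ 0)"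
    by (rule sum.cong, auto simp: Sm_def n yi)
  also have "\<dots> = real n * y $ 0" by simp
  finally have "(Sm n *\<^sub>v y) $ 0 = real n * y $ 0" using row[OF n] by simp
  hence y0: "y $ 0 = 0" using y(3) n by simp
  have "y = 0\<^sub>v n"
  proof (rule eq_vecI)
    fix i assume "i < dim_vec (0\<^sub>v n)" hence i: "i < n" by simp
    show "y $ i = 0\<^sub>v n $ i" using yi[OF i] y0 i by (cases "i = 0", auto)
  qed (insert y, auto)
  with y(2) show False by simp
qed

lemma det_Dm1: "n > 0 \<Longrightarrow> det (Dm1 n c) = c"
proof -
  assume n: "n > 0"
  have "det (Dm1 n c) = (\<Prod>j<n. if j = 0 then c else 1)" unfolding Dm1_def by (rule det_diag)
  also have "\<dots> = c" using n by (simp add: prod.delta)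
  finally show ?thesis .
qed

lemma charpoly_LP: assumes Lc: "L \<in> carrier_mat n n" and n: "n > 0"
  and rs: "\<And>i. i < n \<Longrightarrow> (\<Sum>j<n. L $$ (i,j)) = 0"
  shows "[:0,1:] * char_poly (L + Jmat n) = [:-1,1:] * char_poly L"
proof -
  have Pc: "L + Jmat n \<in> carrier_mat n n" using Lc by simp
  have "poly ([:0,1:] * char_poly (L + Jmat n)) = poly ([:-1,1:] * char_poly L)"
  proof
    fix lam
    define QL where "QL = mat n n (\<lambda>(i,j). (if i = j then lam else 0) - L $$ (i,j))"
    define QP where "QP = mat n n (\<lambda>(i,j). (if i = j then lam else 0) - (L + Jmat n) $$ (i,j))"
    have QLc: "QL \<in> carrier_mat n n" and QPc: "QP \<in> carrier_mat n n" unfolding QL_def QP_def by auto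
    have Sc: "Sm n \<in> carrier_mat n n" unfolding Sm_def by auto
    have Cc: "Cm n QL \<in> carrier_mat n n" unfolding Cm_def by auto
    have Dc: "\<And>c. Dm1 n c \<in> carrier_mat n n" unfolding Dm1_def by auto
    have PJ: "\<And>i j. i < n \<Longrightarrow> j < n \<Longrightarrow> (L + Jmat n) $$ (i,j) = L $$ (i,j) + 1 / real n"
      using Lc by (auto simp: Jmat_def)
    have rsL: "(\<Sum>k<n. QL $$ (i,k)) = lam" if i: "i < n" for i
    proof -
      have "(\<Sum>k<n. QL $$ (i,k)) = (\<Sum>k<n. (if i = k then lam else 0) - L $$ (i,k))"
        by (rule sum.cong, auto simp: QL_def i)
      also have "\<dots> = lam" using i rs[OF i] by (simp add: sum_subtractf)
      finally show ?thesis .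
    qed
    have rsP: "(\<Sum>k<n. QP $$ (i,k)) = lam - 1" if i: "i < n" for i
    proof -
      have "(\<Sum>k<n. QP $$ (i,k)) = (\<Sum>k<n. (if i = k then lam else 0) - L $$ (i,k) - 1 / real n)"
        by (rule sum.cong, auto simp: QP_def i PJ)
      also have "\<dots> = lam - 1" using i rs[OF i] n by (simp add: sum_subtractf)
      finally show ?thesis .
    qed
    have CC: "Cm n QP = Cm n QL"
      by (rule eq_matI, auto simp: Cm_def QP_def QL_def PJ n)
    have eL: "det QL * det (Sm n) = det (Cm n QL) * lam"
      using det_mult[OF QLc Sc] det_mult[OF Cc Dc] QS[OF QLc rsL] det_Dm1[OF n] by simp
    have eP: "det QP * det (Sm n) = det (Cm n QL) * (lam - 1)"
      using det_mult[OF QPc Sc] det_mult[OF Cc Dc] QS[OF QPc rsP] det_Dm1[OF n] CC by simp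
    have "lam * (det QP * det (Sm n)) = (lam - 1) * (det QL * det (Sm n))"
      unfolding eL eP by (simp add: algebra_simps)
    hence "(lam * det QP) * det (Sm n) = ((lam - 1) * det QL) * det (Sm n)" by (simp add: mult.assoc)
    hence "lam * det QP = (lam - 1) * det QL" using det_Sm[OF n] mult_right_cancel by blast
    thus "poly ([:0,1:] * char_poly (L + Jmat n)) lam = poly ([:-1,1:] * char_poly L) lam"
      using poly_char[OF Lc, of lam] poly_char[OF Pc, of lam] unfolding QL_def QP_def by (simp add: algebra_simps)
  qed
  thus ?thesis by (simp add: poly_eq_poly_eq_iff)
qed

lemma alg_mult_LP: assumes Lc: "L \<in> carrier_mat n n" and n: "n > 0"
  and rs: "\<And>i. i < n \<Longrightarrow> (\<Sum>j<n. L $$ (i,j)) = 0"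
  shows "alg_mult L 0 = alg_mult (L + Jmat n) 0 + 1"
    and "alg_mult (L + Jmat n) 1 = alg_mult L 1 + 1"
proof -
  have Pc: "L + Jmat n \<in> carrier_mat n n" using Lc by simp
  have id: "[:0,1:] * char_poly (L + Jmat n) = [:-1,1:] * char_poly L" by (rule charpoly_LP[OF Lc n rs])
  have nzP: "[:0,1:] * char_poly (L + Jmat n) \<noteq> 0" unfolding mult_eq_0_iff using char_poly_nz[OF Pc] by simp
  have nzL: "[:-1,1:] * char_poly L \<noteq> 0" unfolding mult_eq_0_iff using char_poly_nz[OF Lc] by simp
  have x0: "Polynomial.order (0::real) [:0,1:] = 1" using order_power_n_n[of "0::real" 1] by simp
  have x1: "Polynomial.order (1::real) [:0,1:] = 0" by (rule order_0I, simp)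
  have y0: "Polynomial.order (0::real) [:-1,1:] = 0" by (rule order_0I, simp)
  have y1: "Polynomial.order (1::real) [:-1,1:] = 1" using order_power_n_n[of "1::real" 1] by simp
  show "alg_mult L 0 = alg_mult (L + Jmat n) 0 + 1"
    using order_mult[OF nzP, of 0] order_mult[OF nzL, of 0] x0 y0 unfolding id alg_mult_def by simp
  show "alg_mult (L + Jmat n) 1 = alg_mult L 1 + 1"
    using order_mult[OF nzP, of 1] order_mult[OF nzL, of 1] x1 y1 unfolding id alg_mult_def by simp
qed


lemma kernel_dim_cong: assumes "dim_col A = dim_col B" "mat_kernel A = mat_kernel B"
  shows "kernel_dim A = kernel_dim B"
  using assms by (simp add: kernel_dim_def)

lemma mat_kernel_neg: fixes A :: "'a::field mat" assumes A: "A \<in> carrier_mat n n"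
  shows "mat_kernel (- A) = mat_kernel A"
  using A unfolding mat_kernel_def by (auto simp: uminus_zero_vec_eq)

lemma kernel_dim_neg: fixes A :: "'a::field mat" assumes A: "A \<in> carrier_mat n n"
  shows "kernel_dim (- A) = kernel_dim A"
  by (rule kernel_dim_cong, insert A mat_kernel_neg[OF A], auto)

lemma char_matrix_0: assumes A: "(A :: real mat) \<in> carrier_mat n n" shows "char_matrix A 0 = A"
  by (rule eq_matI, insert A, auto simp: char_matrix_def)

lemma core: assumes std: "standardized_laplacian n L" and n: "n > 0"
  shows "alg_mult L 0 = in_forest_dim n (digraph_of n L)"
    and "geom_mult L 0 = in_forest_dim n (digraph_of n L)"
    and "kernel_dim (L + Jmat n) = in_forest_dim n (digraph_of n L) - 1"
proof -
  let ?E = "digraph_of n L"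
  have "reaching n ?E {..<n}" unfolding reaching_def by auto
  from ex_has_least_nat[of "reaching n ?E" "{..<n}" card, OF this]
  obtain R where R: "reaching n ?E R" and minC: "\<And>R'. reaching n ?E R' \<Longrightarrow> card R \<le> card R'"
    by blast
  have finR: "finite R" using R unfolding reaching_def using finite_subset by blast
  have minR': "\<not> reaching n ?E (R - {r})" if r: "r \<in> R" for r
  proof
    assume "reaching n ?E (R - {r})"
    from minC[OF this] have "card R \<le> card (R - {r})" .
    moreover have "card (R - {r}) < card R" using finR r by (rule card_Diff1_less)
    ultimately show False by simp
  qed
  interpret lapR n L R by (unfold_locales, rule std, rule n, rule R, rule minR')
  have E: "?E \<subseteq> {..<n} \<times> {..<n}" by (auto simp: digraph_of_iff)
  have d: "in_forest_dim n ?E = card R" by (rule in_forest_dim_eq[OF E R minC])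
  show "alg_mult L 0 = in_forest_dim n ?E" unfolding d by (rule alg_mult_L0)
  show "geom_mult L 0 = in_forest_dim n ?E" unfolding d geom_mult_def char_matrix_0[OF Lc]
    by (rule kernel_dim_L)
  show "kernel_dim (L + Jmat n) = in_forest_dim n ?E - 1" unfolding d by (rule kernel_dim_P)
qed

lemma Kmat_index: "i < n \<Longrightarrow> j < n \<Longrightarrow> Kmat n $$ (i,j) = (if i = j then 1 else 0) - 1 / real n"
  unfolding Kmat_def Jmat_def by simp

lemma Kmat_carrier[simp]: "Kmat n \<in> carrier_mat n n" unfolding Kmat_def by (rule minus_carrier_mat, simp)

lemma compl_std: assumes std: "standardized_laplacian n L" and n: "n > 0"
  shows "standardized_laplacian n (Kmat n - L)"
    and "digraph_of n (Kmat n - L) = compl_digraph_of n L"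
proof -
  have Lc: "L \<in> carrier_mat n n" by (rule std_carrier[OF std])
  have idx: "\<And>i j. i < n \<Longrightarrow> j < n \<Longrightarrow> (Kmat n - L) $$ (i,j) = (if i = j then 1 else 0) - 1 / real n - L $$ (i,j)"
    using Lc by (simp add: Kmat_index)
  have bnd: "\<And>i j. i < n \<Longrightarrow> j < n \<Longrightarrow> i \<noteq> j \<Longrightarrow> L $$ (i,j) \<le> 0 \<and> \<bar>L $$ (i,j)\<bar> \<le> 1 / real n"
    using std unfolding standardized_laplacian_def by blast
  show "standardized_laplacian n (Kmat n - L)"
    unfolding standardized_laplacian_def
  proof (intro conjI allI impI)
    show "Kmat n - L \<in> carrier_mat n n" using Lc by (rule minus_carrier_mat)
  next
    fix i assume i: "i < n"
    have "(\<Sum>j<n. (Kmat n - L) $$ (i, j)) = (\<Sum>j<n. (if i = j then 1 else 0) - 1 / real n - L $$ (i,j))"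
      by (rule sum.cong, auto simp: idx i)
    also have "\<dots> = 1 - 1 - 0" using i std_rowsum[OF std i] n by (simp add: sum_subtractf)
    finally show "(\<Sum>j<n. (Kmat n - L) $$ (i, j)) = 0" by simp
  next
    fix i j assume ij: "i < n" "j < n" "i \<noteq> j"
    from bnd[OF ij] have "- (1 / real n) \<le> L $$ (i,j)" "L $$ (i,j) \<le> 0" by auto
    thus "(Kmat n - L) $$ (i, j) \<le> 0" "\<bar>(Kmat n - L) $$ (i, j)\<bar> \<le> 1 / real n"
      unfolding idx[OF ij(1,2)] using ij(3) by auto
  qed
  show "digraph_of n (Kmat n - L) = compl_digraph_of n L"
    unfolding digraph_of_def compl_digraph_of_def using idx by auto
qed


lemma vec_eq_comp: assumes "v \<in> carrier_vec n" "w \<in> carrier_vec n"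
  shows "v = w \<longleftrightarrow> (\<forall>i<n. v $ i = w $ i)"
  using assms by (auto intro: eq_vecI)

lemma Kmat_dims[simp]: "dim_row (Kmat n) = n" "dim_col (Kmat n) = n"
  unfolding Kmat_def Jmat_def by auto

lemma mat_eqI_n: assumes "A \<in> carrier_mat n n" "B \<in> carrier_mat n n"
  and "\<And>i j. i < n \<Longrightarrow> j < n \<Longrightarrow> A $$ (i,j) = B $$ (i,j)" shows "A = B"
  by (rule eq_matI, insert assms, auto)

theorem theorem7:
  fixes n :: nat and L :: "real mat"
  assumes "n > 0"
    and "standardized_laplacian n L"
  defines "P \<equiv> L + Jmat n"
    and "Lc \<equiv> Kmat n - L"
    and "d \<equiv> in_forest_dim n (digraph_of n L)"
    and "dc \<equiv> in_forest_dim n (compl_digraph_of n L)"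
  shows
    "alg_mult L 0 = d \<and> alg_mult L 1 = dc - 1 \<and>
     alg_mult P 0 = d - 1 \<and> alg_mult P 1 = dc \<and>
     alg_mult Lc 1 = d - 1 \<and> alg_mult Lc 0 = dc \<and>
     (\<forall>A \<in> {L, P, Lc}. \<forall>ev \<in> {0, 1}. alg_mult A ev > 0 \<longrightarrow> semisimple_eigenvalue A ev) \<and>
     eigenspace P 0 = eigenspace Lc 1 \<and>
     eigenspace P 1 = eigenspace Lc 0 \<and>
     (\<forall>v \<in> eigenspace L 0. Kmat n *\<^sub>v v \<noteq> 0\<^sub>v n \<longrightarrow> Kmat n *\<^sub>v v \<in> eigenspace P 0) \<and>
     (\<forall>x \<in> eigenspace P 1. Kmat n *\<^sub>v x \<noteq> 0\<^sub>v n \<longrightarrow> Kmat n *\<^sub>v x \<in> eigenspace L 1)"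
proof -
  have n: "n > 0" and std: "standardized_laplacian n L" using assms(1,2) by auto
  have P_def: "P = L + Jmat n" using assms(3) by simp
  have Lc_def: "Lc = Kmat n - L" using assms(4) by simp
  have d_def: "d = in_forest_dim n (digraph_of n L)" using assms(5) by simp
  have dc_def: "dc = in_forest_dim n (compl_digraph_of n L)" using assms(6) by simp
  have Lm: "L \<in> carrier_mat n n" by (rule std_carrier[OF std])
  have Pm: "P \<in> carrier_mat n n" unfolding P_def using Lm by simp
  have Lcm: "Lc \<in> carrier_mat n n" unfolding Lc_def using Lm by (rule minus_carrier_mat)
  have Pidx: "\<And>i j. i < n \<Longrightarrow> j < n \<Longrightarrow> P $$ (i,j) = L $$ (i,j) + 1 / real n"
    unfolding P_def using Lm by simp
  have Lcidx: "\<And>i j. i < n \<Longrightarrow> j < n \<Longrightarrow> Lc $$ (i,j) = (if i = j then 1 else 0) - 1 / real n - L $$ (i,j)"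
    unfolding Lc_def using Lm by (simp add: Kmat_index)
  have rs: "\<And>i. i < n \<Longrightarrow> (\<Sum>j<n. L $$ (i,j)) = 0" by (rule std_rowsum[OF std])
  have stdc: "standardized_laplacian n Lc" unfolding Lc_def by (rule compl_std(1)[OF std n])
  have dgc: "digraph_of n Lc = compl_digraph_of n L" unfolding Lc_def by (rule compl_std(2)[OF std n])
  have rsc: "\<And>i. i < n \<Longrightarrow> (\<Sum>j<n. Lc $$ (i,j)) = 0" by (rule std_rowsum[OF stdc])
  note c = core[OF std n, folded d_def]
  note cc = core[OF stdc n, unfolded dgc, folded dc_def]
  note B1 = alg_mult_LP(1)[OF Lm n rs, folded P_def]
  note B2 = alg_mult_LP(1)[OF Lcm n rsc]
  have Ld: "dim_row L = n" "dim_col L = n" using Lm by auto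
  have Pd: "dim_row P = n" "dim_col P = n" using Pm by auto
  have Lcd: "dim_row Lc = n" "dim_col Lc = n" using Lcm by auto
  have LcJm: "Lc + Jmat n \<in> carrier_mat n n" using Lcm by simp
  have M1: "Lc = 1\<^sub>m n - P"
    by (rule mat_eqI_n[OF Lcm minus_carrier_mat[OF Pm]], simp add: Lcidx Pidx Pd)
  have M2: "Lc + Jmat n = 1\<^sub>m n - L"
    by (rule mat_eqI_n[OF LcJm minus_carrier_mat[OF Lm]], simp add: Lcidx Ld)
  have C1: "\<And>ev. alg_mult Lc ev = alg_mult P (1 - ev)" unfolding M1 by (rule alg_mult_reflect[OF Pm])
  have C2: "\<And>ev. alg_mult (Lc + Jmat n) ev = alg_mult L (1 - ev)" unfolding M2 by (rule alg_mult_reflect[OF Lm])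
  have aL0: "alg_mult L 0 = d" by (rule c(1))
  have aP0: "alg_mult P 0 = d - 1" using B1 aL0 by simp
  have aLc0: "alg_mult Lc 0 = dc" by (rule cc(1))
  have aL1: "alg_mult L 1 = dc - 1" using B2 C2[of 0] aLc0 by simp
  have aP1: "alg_mult P 1 = dc" using C1[of 0] aLc0 by simp
  have aLc1: "alg_mult Lc 1 = d - 1" using C1[of 1] aP0 by simp
  have chL1: "char_matrix L 1 = - (Lc + Jmat n)"
    by (rule mat_eqI_n[OF char_matrix_closed[OF Lm] uminus_carrier_mat[OF LcJm]], simp add: char_matrix_def Lcidx Ld Lcd)
  have chP1: "char_matrix P 1 = - Lc"
    by (rule mat_eqI_n[OF char_matrix_closed[OF Pm] uminus_carrier_mat[OF Lcm]], simp add: char_matrix_def Lcidx Pidx Pd Lcd)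
  have chLc1: "char_matrix Lc 1 = - P"
    by (rule mat_eqI_n[OF char_matrix_closed[OF Lcm] uminus_carrier_mat[OF Pm]], simp add: char_matrix_def Lcidx Pidx Pd Lcd)
  have gL0: "geom_mult L 0 = d" by (rule c(2))
  have gL1: "geom_mult L 1 = dc - 1"
    unfolding geom_mult_def chL1 kernel_dim_neg[OF LcJm] using cc(3) by simp
  have gP0: "geom_mult P 0 = d - 1"
    unfolding geom_mult_def char_matrix_0[OF Pm] using c(3) P_def by simp
  have gLc0: "geom_mult Lc 0 = dc" by (rule cc(2))
  have gP1: "geom_mult P 1 = dc"
    unfolding geom_mult_def chP1 kernel_dim_neg[OF Lcm] using gLc0 char_matrix_0[OF Lcm]
    unfolding geom_mult_def by simp
  have gLc1: "geom_mult Lc 1 = d - 1"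
    unfolding geom_mult_def chLc1 kernel_dim_neg[OF Pm] using gP0 char_matrix_0[OF Pm]
    unfolding geom_mult_def by simp
  have ss: "semisimple_eigenvalue L 0" "semisimple_eigenvalue L 1" "semisimple_eigenvalue P 0"
    "semisimple_eigenvalue P 1" "semisimple_eigenvalue Lc 0" "semisimple_eigenvalue Lc 1"
    unfolding semisimple_eigenvalue_def using aL0 aL1 aP0 aP1 aLc0 aLc1 gL0 gL1 gP0 gP1 gLc0 gLc1 by auto
  have ssall: "\<forall>A \<in> {L, P, Lc}. \<forall>ev \<in> {0, 1}. alg_mult A ev > 0 \<longrightarrow> semisimple_eigenvalue A ev"
    using ss by blast
  have Lcv: "Lc *\<^sub>v v = v - P *\<^sub>v v" if v: "v \<in> carrier_vec n" for v
    unfolding M1 using minus_mult_distrib_mat_vec[OF one_carrier_mat Pm v] v by simp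
  have es1: "eigenspace P 0 = eigenspace Lc 1"
  proof -
    have "v \<in> eigenspace P 0 \<longleftrightarrow> v \<in> eigenspace Lc 1" for v
    proof (cases "v \<in> carrier_vec n")
      case True
      have "P *\<^sub>v v = 0 \<cdot>\<^sub>v v \<longleftrightarrow> (\<forall>i<n. (P *\<^sub>v v) $ i = 0)"
        by (subst vec_eq_comp[of _ n], insert True Pm, auto)
      also have "\<dots> \<longleftrightarrow> (\<forall>i<n. v $ i - (P *\<^sub>v v) $ i = v $ i)" by auto
      also have "\<dots> \<longleftrightarrow> Lc *\<^sub>v v = 1 \<cdot>\<^sub>v v"
        unfolding Lcv[OF True] by (subst vec_eq_comp[of _ n], insert True Pm, auto)
      finally show ?thesis unfolding eigenspace_def using True Pm Lcm by auto
    next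
      case False thus ?thesis unfolding eigenspace_def using Pm Lcm by auto
    qed
    thus ?thesis by blast
  qed
  have es2: "eigenspace P 1 = eigenspace Lc 0"
  proof -
    have "v \<in> eigenspace P 1 \<longleftrightarrow> v \<in> eigenspace Lc 0" for v
    proof (cases "v \<in> carrier_vec n")
      case True
      have "P *\<^sub>v v = 1 \<cdot>\<^sub>v v \<longleftrightarrow> (\<forall>i<n. (P *\<^sub>v v) $ i = v $ i)"
        by (subst vec_eq_comp[of _ n], insert True Pm, auto)
      also have "\<dots> \<longleftrightarrow> (\<forall>i<n. v $ i - (P *\<^sub>v v) $ i = 0)" by auto
      also have "\<dots> \<longleftrightarrow> Lc *\<^sub>v v = 0 \<cdot>\<^sub>v v"
        unfolding Lcv[OF True] by (subst vec_eq_comp[of _ n], insert True Pm, auto)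
      finally show ?thesis unfolding eigenspace_def using True Pm Lcm by auto
    next
      case False thus ?thesis unfolding eigenspace_def using Pm Lcm by auto
    qed
    thus ?thesis by blast
  qed
  have Km: "Kmat n \<in> carrier_mat n n" by simp
  have PK: "P * Kmat n = L"
  proof (rule eq_matI)
    fix i j assume "i < dim_row L" "j < dim_col L"
    hence i: "i < n" and j: "j < n" using Lm by auto
    have "(P * Kmat n) $$ (i,j) = (\<Sum>k<n. P $$ (i,k) * Kmat n $$ (k,j))"
      by (rule mat_mult_index_sum[OF Pm Km i j])
    also have "\<dots> = (\<Sum>k<n. (if k = j then L $$ (i,k) + 1 / real n else 0) - (L $$ (i,k) / real n + 1 / real n / real n))"
      by (rule sum.cong, auto simp: Pidx Kmat_index i j field_simps)
    also have "\<dots> = (L $$ (i,j) + 1 / real n) - ((\<Sum>k<n. L $$ (i,k)) / real n + real n * (1 / real n / real n))"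
      using j by (simp add: sum_subtractf sum.distrib sum_divide_distrib)
    also have "\<dots> = L $$ (i,j)" using rs[OF i] n by simp
    finally show "(P * Kmat n) $$ (i,j) = L $$ (i,j)" .
  qed (insert Lm Pm Km, auto)
  have LK: "L * Kmat n = L"
  proof (rule eq_matI)
    fix i j assume "i < dim_row L" "j < dim_col L"
    hence i: "i < n" and j: "j < n" using Lm by auto
    have "(L * Kmat n) $$ (i,j) = (\<Sum>k<n. L $$ (i,k) * Kmat n $$ (k,j))"
      by (rule mat_mult_index_sum[OF Lm Km i j])
    also have "\<dots> = (\<Sum>k<n. (if k = j then L $$ (i,k) else 0) - L $$ (i,k) / real n)"
      by (rule sum.cong, auto simp: Kmat_index i j field_simps)
    also have "\<dots> = L $$ (i,j) - (\<Sum>k<n. L $$ (i,k)) / real n"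
      using j by (simp add: sum_subtractf sum_divide_distrib)
    also have "\<dots> = L $$ (i,j)" using rs[OF i] by simp
    finally show "(L * Kmat n) $$ (i,j) = L $$ (i,j)" .
  qed (insert Lm Km, auto)
  have iva: "\<forall>v \<in> eigenspace L 0. Kmat n *\<^sub>v v \<noteq> 0\<^sub>v n \<longrightarrow> Kmat n *\<^sub>v v \<in> eigenspace P 0"
  proof (intro ballI impI)
    fix v assume v: "v \<in> eigenspace L 0"
    hence vc: "v \<in> carrier_vec n" and Lv: "L *\<^sub>v v = 0 \<cdot>\<^sub>v v" unfolding eigenspace_def using Lm by auto
    have Kvc: "Kmat n *\<^sub>v v \<in> carrier_vec n" by (rule mult_mat_vec_carrier[OF Km vc])
    have "P *\<^sub>v (Kmat n *\<^sub>v v) = L *\<^sub>v v" using assoc_mult_mat_vec[OF Pm Km vc] PK by simp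
    also have "\<dots> = 0\<^sub>v n" using Lv vc by auto
    also have "\<dots> = 0 \<cdot>\<^sub>v (Kmat n *\<^sub>v v)" using Kvc by auto
    finally show "Kmat n *\<^sub>v v \<in> eigenspace P 0" unfolding eigenspace_def using Kvc Pm by auto
  qed
  have ivb: "\<forall>x \<in> eigenspace P 1. Kmat n *\<^sub>v x \<noteq> 0\<^sub>v n \<longrightarrow> Kmat n *\<^sub>v x \<in> eigenspace L 1"
  proof (intro ballI impI)
    fix x assume x: "x \<in> eigenspace P 1"
    hence xc: "x \<in> carrier_vec n" and Px: "P *\<^sub>v x = 1 \<cdot>\<^sub>v x" unfolding eigenspace_def using Pm by auto
    have Kxc: "Kmat n *\<^sub>v x \<in> carrier_vec n" by (rule mult_mat_vec_carrier[OF Km xc])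
    have Px': "L *\<^sub>v x + Jmat n *\<^sub>v x = x"
      using Px add_mult_distrib_mat_vec[OF Lm Jmat_carrier xc] xc unfolding P_def by simp
    have Kx: "Kmat n *\<^sub>v x = x - Jmat n *\<^sub>v x"
      unfolding Kmat_def using minus_mult_distrib_mat_vec[OF one_carrier_mat Jmat_carrier xc] xc by simp
    have LxKx: "L *\<^sub>v x = Kmat n *\<^sub>v x"
    proof (subst vec_eq_comp[of _ n])
      show "L *\<^sub>v x \<in> carrier_vec n" using Lm xc by simp
      show "Kmat n *\<^sub>v x \<in> carrier_vec n" by (rule Kxc)
      show "\<forall>i<n. (L *\<^sub>v x) $ i = (Kmat n *\<^sub>v x) $ i"
      proof (intro allI impI)
        fix i assume i: "i < n"
        have "(L *\<^sub>v x + Jmat n *\<^sub>v x) $ i = x $ i" using Px' by simp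
        hence "(L *\<^sub>v x) $ i + (Jmat n *\<^sub>v x) $ i = x $ i" using i by simp
        moreover have "(Kmat n *\<^sub>v x) $ i = x $ i - (Jmat n *\<^sub>v x) $ i" unfolding Kx using i by simp
        ultimately show "(L *\<^sub>v x) $ i = (Kmat n *\<^sub>v x) $ i" by simp
      qed
    qed
    have "L *\<^sub>v (Kmat n *\<^sub>v x) = L *\<^sub>v x" using assoc_mult_mat_vec[OF Lm Km xc] LK by simp
    also have "\<dots> = 1 \<cdot>\<^sub>v (Kmat n *\<^sub>v x)" using LxKx by simp
    finally show "Kmat n *\<^sub>v x \<in> eigenspace L 1" unfolding eigenspace_def using Kxc Lm by auto
  qed
  show ?thesis using aL0 aL1 aP0 aP1 aLc1 aLc0 ssall es1 es2 iva ivb by blast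
qed


end
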